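(* Let $M$ be an $8$-manifold with an $\mathrm{SL}(4,\mathbb R)$-structure $(g,\omega_r,\Omega_+,\Omega_-)$ locally modelled as $$g=(e^0)^2-\sum_{i=1}^4(e^i)^2+\sum_{a=5}^7(e^a)^2,\quad \Omega_\pm=(e^4\pm e^0)\wedge(e^1\pm e^5)\wedge(e^2\pm e^6)\wedge(e^3\pm e^7),\quad \omega_r=e^{15}+e^{26}+e^{37}+e^{40}.$$ For $\theta\in(0,\pi/2)$ define $$\Phi_\theta=\cos(2\theta)\,\tfrac12(\Omega_++\Omega_-)+i\sin(2\theta)\,\tfrac12(\Omega_+-\Omega_-)+\tfrac12\,\omega_r\wedge\omega_r .$$ Then the $\mathrm{SL}(4,\mathbb R)$-structure is integrable if and only if $d\Phi_\theta=0$.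
   Context: Notation: $e^{ab}=e^a\wedge e^b$. The $\mathrm{SL}(4,\mathbb R)$-structure is called integrable (torsion-free) if the Levi-Civita connection of $g$ preserves $\omega_r$ and $\Omega_\pm$ (equivalently $d\omega_r=0$, $d\Omega_\pm=0$). $\Omega_+$ and $\Omega_-$ are of type $(4,0)$ and $(0,4)$ with respect to the para-complex bigrading determined by the orthogonal para-complex structure $K$ with $\omega_r(X,Y)=g(KX,Y)$. *)

theory Defs
  imports "HOL-Analysis.Analysis"
begin

text \<open>A (possibly inhomogeneous) differential form with coefficients in 'a is represented by
  its coefficient functions: alpha I x is the coefficient of dx_I at x, where for
  I = {i1 < ... < ik} we put dx_I = dx_i1 wedge ... wedge dx_ik.\<close>

type_synonym 'a dform = "8 set \<Rightarrow> real^8 \<Rightarrow> 'a"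

definition partial :: "8 \<Rightarrow> (real^8 \<Rightarrow> 'a::real_normed_vector) \<Rightarrow> real^8 \<Rightarrow> 'a" where
  "partial j f x = vector_derivative (\<lambda>t. f (x + t *\<^sub>R axis j 1)) (at 0)"

definition smooth8_on :: "(real^8) set \<Rightarrow> (real^8 \<Rightarrow> 'a::real_normed_vector) \<Rightarrow> bool" where
  "smooth8_on U f \<longleftrightarrow>
     (\<forall>js. continuous_on U (foldr partial js f)) \<and>
     (\<forall>js j. \<forall>x\<in>U. (\<lambda>t. foldr partial js f (x + t *\<^sub>R axis j 1)) differentiable (at 0))"

text \<open>Sign of the shuffle: dx_I wedge dx_J = (-1)^(inversions I J) dx_(I union J) for disjoint I, J.\<close>
definition inversions :: "8 set \<Rightarrow> 8 set \<Rightarrow> nat" where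
  "inversions I J = card {(i, j). i \<in> I \<and> j \<in> J \<and> j < i}"

definition fadd :: "'a::real_normed_field dform \<Rightarrow> 'a dform \<Rightarrow> 'a dform" where
  "fadd a b = (\<lambda>I x. a I x + b I x)"

definition fsub :: "'a::real_normed_field dform \<Rightarrow> 'a dform \<Rightarrow> 'a dform" where
  "fsub a b = (\<lambda>I x. a I x - b I x)"

definition fscale :: "'a::real_normed_field \<Rightarrow> 'a dform \<Rightarrow> 'a dform" where
  "fscale c a = (\<lambda>I x. c * a I x)"

definition wedge :: "'a::real_normed_field dform \<Rightarrow> 'a dform \<Rightarrow> 'a dform" where
  "wedge a b = (\<lambda>K x. \<Sum>I\<in>Pow K. (-1) ^ inversions I (K - I) * a I x * b (K - I) x)"

text \<open>Exterior derivative: d(f dx_I) = sum_j (partial_j f) dx_j wedge dx_I.\<close>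
definition ext_d :: "'a::real_normed_field dform \<Rightarrow> 'a dform" where
  "ext_d a = (\<lambda>K x. \<Sum>j\<in>K. (-1) ^ card {i\<in>K. i < j} * partial j (a (K - {j})) x)"

definition cform :: "real dform \<Rightarrow> complex dform" where
  "cform a = (\<lambda>I x. complex_of_real (a I x))"

definition dclosed_on :: "(real^8) set \<Rightarrow> 'a::real_normed_field dform \<Rightarrow> bool" where
  "dclosed_on U a \<longleftrightarrow> (\<forall>x\<in>U. \<forall>K. ext_d a K x = 0)"

definition coframe_on :: "(real^8) set \<Rightarrow> (nat \<Rightarrow> real dform) \<Rightarrow> bool" where
  "coframe_on U e \<longleftrightarrow>
     (\<forall>i<8. \<forall>I. card I \<noteq> 1 \<longrightarrow> (\<forall>x. e i I x = 0)) \<and>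
     (\<forall>i<8. \<forall>I. smooth8_on U (e i I)) \<and>
     (\<forall>x\<in>U. \<forall>c::nat \<Rightarrow> real. (\<forall>j. (\<Sum>i<8. c i * e i {j} x) = 0) \<longrightarrow> (\<forall>i<8. c i = 0))"

definition Omega_plus :: "(nat \<Rightarrow> real dform) \<Rightarrow> real dform" where
  "Omega_plus e = wedge (wedge (wedge (fadd (e 4) (e 0)) (fadd (e 1) (e 5))) (fadd (e 2) (e 6)))
                        (fadd (e 3) (e 7))"

definition Omega_minus :: "(nat \<Rightarrow> real dform) \<Rightarrow> real dform" where
  "Omega_minus e = wedge (wedge (wedge (fsub (e 4) (e 0)) (fsub (e 1) (e 5))) (fsub (e 2) (e 6)))
                        (fsub (e 3) (e 7))"

definition omega_r :: "(nat \<Rightarrow> real dform) \<Rightarrow> real dform" where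
  "omega_r e = fadd (fadd (wedge (e 1) (e 5)) (wedge (e 2) (e 6))) (fadd (wedge (e 3) (e 7)) (wedge (e 4) (e 0)))"

definition metric_g :: "(nat \<Rightarrow> real dform) \<Rightarrow> real^8 \<Rightarrow> real^8 \<Rightarrow> real^8 \<Rightarrow> real" where
  "metric_g e x v w = (let c = (\<lambda>i u. \<Sum>j\<in>UNIV. e i {j} x * u $ j) in
     c 0 v * c 0 w - (\<Sum>i\<in>{1..4}. c i v * c i w) + (\<Sum>a\<in>{5..7}. c a v * c a w))"

text \<open>Integrability (torsion-freeness), in the equivalent form given in the paper.\<close>
definition sl4_integrable :: "(real^8) set \<Rightarrow> (nat \<Rightarrow> real dform) \<Rightarrow> bool" where
  "sl4_integrable U e \<longleftrightarrow> dclosed_on U (omega_r e) \<and> dclosed_on U (Omega_plus e) \<and> dclosed_on U (Omega_minus e)"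

definition Phi :: "(nat \<Rightarrow> real dform) \<Rightarrow> real \<Rightarrow> complex dform" where
  "Phi e \<theta> = fadd (fadd
      (fscale (complex_of_real (cos (2 * \<theta>) / 2)) (cform (fadd (Omega_plus e) (Omega_minus e))))
      (fscale (\<i> * complex_of_real (sin (2 * \<theta>) / 2)) (cform (fsub (Omega_plus e) (Omega_minus e)))))
      (fscale (1/2) (cform (wedge (omega_r e) (omega_r e))))"

end

theory Submission
  imports Defs "HOL-Library.Function_Algebras"
begin


type_synonym pf = "8 set \<Rightarrow> real"

definition w :: "pf \<Rightarrow> pf \<Rightarrow> pf" where
  "w a b = (\<lambda>K. \<Sum>I\<in>Pow K. (-1) ^ inversions I (K - I) * a I * b (K - I))"

lemma inv_Un_left: assumes "A \<inter> B = {}"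
  shows "inversions (A \<union> B) C = inversions A C + inversions B C"
proof -
  have e: "{(i,j). i\<in>A\<union>B \<and> j\<in>C \<and> j<i} = {(i,j). i\<in>A \<and> j\<in>C \<and> j<i} \<union> {(i,j). i\<in>B \<and> j\<in>C \<and> j<i}" by auto
  have "{(i,j). i\<in>A \<and> j\<in>C \<and> j<i} \<inter> {(i,j). i\<in>B \<and> j\<in>C \<and> j<i} = {}" using assms by auto
  then show ?thesis unfolding inversions_def e by (simp add: card_Un_disjoint)
qed

lemma inv_Un_right: assumes "B \<inter> C = {}"
  shows "inversions A (B \<union> C) = inversions A B + inversions A C"
proof -
  have e: "{(i,j). i\<in>A \<and> j\<in>B\<union>C \<and> j<i} = {(i,j). i\<in>A \<and> j\<in>B \<and> j<i} \<union> {(i,j). i\<in>A \<and> j\<in>C \<and> j<i}" by auto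
  have "{(i,j). i\<in>A \<and> j\<in>B \<and> j<i} \<inter> {(i,j). i\<in>A \<and> j\<in>C \<and> j<i} = {}" using assms by auto
  then show ?thesis unfolding inversions_def e by (simp add: card_Un_disjoint)
qed

lemma inv_single_left: "inversions {j} R = card {r\<in>R. r < j}"
proof -
  have "{(i,r). i\<in>{j} \<and> r\<in>R \<and> r<i} = (\<lambda>r. (j,r)) ` {r\<in>R. r < j}" by auto
  then show ?thesis unfolding inversions_def by (simp add: card_image inj_on_def)
qed

lemma inv_single_right: "inversions R {j} = card {r\<in>R. j < r}"
proof -
  have "{(i,r). i\<in>R \<and> r\<in>{j} \<and> r<i} = (\<lambda>r. (r,j)) ` {r\<in>R. j < r}" by auto
  then show ?thesis unfolding inversions_def by (simp add: card_image inj_on_def)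
qed

lemma w_assoc: "w (w a b) c = w a (w b c)"
proof (rule ext)
  fix K :: "8 set"
  define F where "F = (\<lambda>A B. (-1::real) ^ (inversions A B + inversions A (K - A - B) + inversions B (K - A - B)) * a A * b B * c (K - A - B))"
  have "w (w a b) c K = (\<Sum>I\<in>Pow K. \<Sum>A\<in>Pow I. (-1) ^ inversions I (K - I) * ((-1) ^ inversions A (I - A) * a A * b (I - A)) * c (K - I))"
    unfolding w_def by (simp add: sum_distrib_left sum_distrib_right)
  also have "\<dots> = (\<Sum>(I,A)\<in>Sigma (Pow K) Pow. (-1) ^ inversions I (K - I) * ((-1) ^ inversions A (I - A) * a A * b (I - A)) * c (K - I))"
    by (rule sum.Sigma) auto
  also have "\<dots> = (\<Sum>(A,B)\<in>Sigma (Pow K) (\<lambda>A. Pow (K - A)). F A B)"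
  proof (rule sum.reindex_bij_witness[where i="\<lambda>(A,B). (A \<union> B, A)" and j="\<lambda>(I,A). (A, I - A)"], goal_cases)
    case (5 p)
    obtain I A where pe: "p = (I,A)" by (cases p)
    have AB: "I \<subseteq> K" "A \<subseteq> I" using 5 pe by auto
    have d: "A \<inter> (I - A) = {}" by auto
    have k1: "K - A - (I - A) = K - I" using AB by auto
    have k2: "A \<union> (I - A) = I" using AB by auto
    have "inversions (A \<union> (I - A)) (K - I) = inversions A (K - I) + inversions (I - A) (K - I)"
      using inv_Un_left[OF d] .
    then show ?case
      unfolding pe F_def using k1 k2 by (simp add: power_add algebra_simps)
  qed auto
  also have "\<dots> = (\<Sum>A\<in>Pow K. \<Sum>B\<in>Pow (K - A). F A B)"
    by (rule sum.Sigma[symmetric]) auto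
  also have "\<dots> = w a (w b c) K"
  proof -
    have "\<And>A B. A \<subseteq> K \<Longrightarrow> B \<subseteq> K - A \<Longrightarrow> inversions A (K - A) = inversions A B + inversions A (K - A - B)"
    proof -
      fix A B assume "A \<subseteq> K" "B \<subseteq> K - A"
      then have "K - A = B \<union> (K - A - B)" "B \<inter> (K - A - B) = {}" by auto
      then show "inversions A (K - A) = inversions A B + inversions A (K - A - B)"
        using inv_Un_right by metis
    qed
    then show ?thesis unfolding w_def F_def
      by (intro sum.cong refl) (simp add: sum_distrib_left power_add algebra_simps)
  qed
  finally show "w (w a b) c K = w a (w b c) K" .
qed

definition sc :: "real \<Rightarrow> pf \<Rightarrow> pf" where "sc r a = (\<lambda>K. r * a K)"
definition hat :: "pf \<Rightarrow> pf" where "hat a = (\<lambda>I. (-1) ^ card I * a I)"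
definition oneform :: "pf \<Rightarrow> bool" where "oneform u \<longleftrightarrow> (\<forall>I. card I \<noteq> 1 \<longrightarrow> u I = 0)"
definition hom :: "nat \<Rightarrow> pf \<Rightarrow> bool" where "hom n u \<longleftrightarrow> (\<forall>I. card I \<noteq> n \<longrightarrow> u I = 0)"

lemma w_add_left: "w (a + b) c = w a c + w b c"
  unfolding w_def by (auto simp: fun_eq_iff algebra_simps sum.distrib)
lemma w_add_right: "w a (b + c) = w a b + w a c"
  unfolding w_def by (auto simp: fun_eq_iff algebra_simps sum.distrib)
lemma w_diff_left: "w (a - b) c = w a c - w b c"
  unfolding w_def by (auto simp: fun_eq_iff algebra_simps sum_subtractf)
lemma w_diff_right: "w a (b - c) = w a b - w a c"
  unfolding w_def by (auto simp: fun_eq_iff algebra_simps sum_subtractf)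
lemma w_uminus_left: "w (- a) c = - w a c"
  unfolding w_def by (auto simp: fun_eq_iff algebra_simps sum_negf)
lemma w_uminus_right: "w a (- c) = - w a c"
  unfolding w_def by (auto simp: fun_eq_iff algebra_simps sum_negf)
lemma w_zero_left[simp]: "w 0 c = 0"
  unfolding w_def by (auto simp: fun_eq_iff)
lemma w_zero_right[simp]: "w a 0 = 0"
  unfolding w_def by (auto simp: fun_eq_iff)
lemma w_sc_left: "w (sc r a) c = sc r (w a c)"
  unfolding w_def sc_def by (auto simp: fun_eq_iff algebra_simps sum_distrib_left)
lemma w_sc_right: "w a (sc r c) = sc r (w a c)"
  unfolding w_def sc_def by (auto simp: fun_eq_iff algebra_simps sum_distrib_left)
lemma w_sum_left: "finite S \<Longrightarrow> w (\<Sum>i\<in>S. f i) c = (\<Sum>i\<in>S. w (f i) c)"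
proof (induction S rule: finite_induct)
  case (insert x F) then show ?case by (simp only: sum.insert[OF insert(1,2)] w_add_left insert(3))
qed (simp add: w_def zero_fun_def)
lemma w_sum_right: "finite S \<Longrightarrow> w c (\<Sum>i\<in>S. f i) = (\<Sum>i\<in>S. w c (f i))"
proof (induction S rule: finite_induct)
  case (insert x F) then show ?case by (simp only: sum.insert[OF insert(1,2)] w_add_right insert(3))
qed (simp add: w_def zero_fun_def)

lemma card_split: "I \<subseteq> (K::8 set) \<Longrightarrow> card K = card I + card (K - I)"
proof -
  assume "I \<subseteq> K"
  then have "K = I \<union> (K - I)" by auto
  then have "card K = card (I \<union> (K - I))" by simp
  also have "\<dots> = card I + card (K - I)" by (rule card_Un_disjoint) auto
  finally show ?thesis .
qed

lemma sum_singletons: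
  assumes "\<And>I. I \<subseteq> K \<Longrightarrow> card I \<noteq> 1 \<Longrightarrow> f I = (0::real)"
  shows "(\<Sum>I\<in>Pow (K::8 set). f I) = (\<Sum>j\<in>K. f {j})"
proof -
  have "(\<Sum>I\<in>Pow K. f I) = (\<Sum>I\<in>(\<lambda>j. {j}) ` K. f I)"
    apply (rule sum.mono_neutral_right)
       apply auto
    subgoal for i by (metis assms card_1_singletonE image_eqI insert_subset)
    done
  also have "\<dots> = (\<Sum>j\<in>K. f {j})" by (rule sum.reindex_cong[where l="\<lambda>j. {j}"]) (auto simp: inj_on_def)
  finally show ?thesis .
qed

lemma w_oneform_left: assumes "oneform u"
  shows "w u Y K = (\<Sum>j\<in>K. (-1) ^ card {r\<in>K - {j}. r < j} * u {j} * Y (K - {j}))"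
  unfolding w_def
  by (subst sum_singletons) (use assms in \<open>auto simp: oneform_def inv_single_left\<close>)

lemma w_oneform_right: assumes "oneform u"
  shows "w Y u K = (\<Sum>j\<in>K. (-1) ^ card {r\<in>K - {j}. j < r} * Y (K - {j}) * u {j})"
proof -
  have "w Y u K = (\<Sum>I\<in>Pow K. (-1) ^ inversions (K - (K - I)) (K - I) * Y (K - (K - I)) * u (K - I))"
    unfolding w_def by (intro sum.cong) (auto simp: Diff_Diff_Int Int_absorb1)
  also have "\<dots> = (\<Sum>I\<in>Pow K. (-1) ^ inversions (K - I) I * Y (K - I) * u I)"
    by (rule sum.reindex_bij_witness[where i="\<lambda>I. K - I" and j="\<lambda>I. K - I"]) (auto simp: Diff_Diff_Int Int_absorb1)
  also have "\<dots> = (\<Sum>j\<in>K. (-1) ^ card {r\<in>K - {j}. j < r} * Y (K - {j}) * u {j})"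
    by (subst sum_singletons) (use assms in \<open>auto simp: oneform_def inv_single_right\<close>)
  finally show ?thesis .
qed

lemma card_lt_gt: assumes "j \<notin> R" shows "card R = card {r\<in>R. r < j} + card {r\<in>R. j < (r::8)}"
proof -
  have "R = {r\<in>R. r < j} \<union> {r\<in>R. j < r}" using assms by (auto simp: not_less le_less)
  then have "card R = card ({r\<in>R. r < j} \<union> {r\<in>R. j < r})" by simp
  also have "\<dots> = card {r\<in>R. r < j} + card {r\<in>R. j < (r::8)}" by (rule card_Un_disjoint) auto
  finally show ?thesis .
qed

lemma w_comm1: assumes "oneform u" shows "w u Y = w (hat Y) u"
proof (rule ext)
  fix K :: "8 set"
  show "w u Y K = w (hat Y) u K"
    unfolding w_oneform_left[OF assms] w_oneform_right[OF assms]
  proof (intro sum.cong refl)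
    fix j assume "j \<in> K"
    have c: "card (K - {j}) = card {r\<in>K - {j}. r < j} + card {r\<in>K - {j}. j < r}"
      by (rule card_lt_gt) auto
    show "(-1) ^ card {r\<in>K - {j}. r < j} * u {j} * Y (K - {j}) = (-1) ^ card {r\<in>K - {j}. j < r} * hat Y (K - {j}) * u {j}"
      unfolding hat_def c by (simp add: power_add algebra_simps)
  qed
qed

lemma hat_hat[simp]: "hat (hat a) = a"
  by (auto simp: hat_def fun_eq_iff power_mult_distrib[symmetric])

lemma hat_w: "hat (w a b) = w (hat a) (hat b)"
  unfolding hat_def w_def
  by (auto simp: fun_eq_iff sum_distrib_left intro!: sum.cong) (auto simp: card_split[of _ "_"] power_add algebra_simps)

lemma hat_add: "hat (a + b) = hat a + hat b" by (auto simp: hat_def fun_eq_iff algebra_simps)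
lemma hat_diff: "hat (a - b) = hat a - hat b" by (auto simp: hat_def fun_eq_iff algebra_simps)
lemma hat_uminus: "hat (- a) = - hat a" by (auto simp: hat_def fun_eq_iff algebra_simps)
lemma hat_sc: "hat (sc r a) = sc r (hat a)" by (auto simp: hat_def sc_def fun_eq_iff algebra_simps)
lemma hat_zero[simp]: "hat 0 = 0" by (auto simp: hat_def fun_eq_iff)

lemma hat_oneform: assumes "oneform u" shows "hat u = - u"
proof (rule ext)
  fix I show "hat u I = (- u) I"
    by (cases "card I = 1") (use assms in \<open>auto simp: hat_def oneform_def\<close>)
qed

lemma w_self1: assumes "oneform u" shows "w u u = 0"
proof -
  have "w u u = w (- u) u" using w_comm1[OF assms, of u] hat_oneform[OF assms] by simp
  then have "w u u = - w u u" by (simp add: w_uminus_left)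
  then show ?thesis by (auto simp: fun_eq_iff)
qed

lemma w_swap1: assumes "oneform u" "oneform v" shows "w u (w v X) = - w v (w u X)"
proof -
  have "w u v = - w v u" using w_comm1[OF assms(1), of v] hat_oneform[OF assms(2)] by (simp add: w_uminus_left)
  then show ?thesis by (simp add: w_assoc[symmetric] w_uminus_left)
qed

lemma hat_w_oneform: "oneform u \<Longrightarrow> w u (hat Z) = - hat (w u Z)"
  by (simp add: hat_w hat_oneform w_uminus_left)

definition kills :: "pf \<Rightarrow> pf \<Rightarrow> bool" where "kills u Z \<longleftrightarrow> w u Z = 0"

lemma kills_self: "oneform u \<Longrightarrow> kills u u" by (simp add: kills_def w_self1)
lemma kills_wl: "kills u Z \<Longrightarrow> kills u (w Z Y)" by (simp add: kills_def w_assoc[symmetric])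
lemma kills_wr: "oneform u \<Longrightarrow> kills u Z \<Longrightarrow> kills u (w Y Z)"
  unfolding kills_def by (simp add: w_assoc[symmetric] w_comm1[of u Y]) (simp add: w_assoc)
lemma kills_add: "kills u a \<Longrightarrow> kills u b \<Longrightarrow> kills u (a + b)" by (simp add: kills_def w_add_right)
lemma kills_diff: "kills u a \<Longrightarrow> kills u b \<Longrightarrow> kills u (a - b)" by (simp add: kills_def w_diff_right)
lemma kills_uminus: "kills u a \<Longrightarrow> kills u (- a)" by (simp add: kills_def w_uminus_right)
lemma kills_sc: "kills u a \<Longrightarrow> kills u (sc r a)" unfolding kills_def by (simp only: w_sc_right) (simp add: sc_def zero_fun_def)
lemma kills_hat: "oneform u \<Longrightarrow> kills u a \<Longrightarrow> kills u (hat a)" by (simp add: kills_def hat_w_oneform)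
lemma kills_zero: "kills u 0" by (simp add: kills_def)

lemma PP:
  fixes P :: "nat \<Rightarrow> pf"
  assumes P: "\<And>i. i < 4 \<Longrightarrow> oneform (P i)" and x: "x < 4" and y: "y < 4" and k: "k < 4"
    and W: "\<And>i. i < 4 \<Longrightarrow> i \<noteq> k \<Longrightarrow> kills (P i) W"
  shows "w (P x) (w (P y) W) = 0"
proof (cases "x = y")
  case True then show ?thesis using P[OF x] by (simp add: w_assoc[symmetric] w_self1)
next
  case False
  show ?thesis
  proof (cases "x = k")
    case True
    then have "y \<noteq> k" using False by simp
    then show ?thesis using W[OF y] by (simp add: kills_def)
  next
    case False
    then show ?thesis using W[OF x] w_swap1[OF P[OF x] P[OF y], of W] by (simp add: kills_def)
  qed
qed

lemma PPsum:
  fixes P :: "nat \<Rightarrow> pf" and W :: "nat \<Rightarrow> pf"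
  assumes P: "\<And>i. i < 4 \<Longrightarrow> oneform (P i)" and x: "x < 4" and y: "y < 4"
    and W: "\<And>k i. k < 4 \<Longrightarrow> i < 4 \<Longrightarrow> i \<noteq> k \<Longrightarrow> kills (P i) (W k)"
  shows "w (P x) (w (P y) (\<Sum>k<4. W k)) = 0"
proof -
  have "w (P x) (w (P y) (W k)) = 0" if k: "k<4" for k
    apply (rule PP[where P=P and k=k and W="W k"]) using P x y k W by auto
  then show ?thesis by (auto simp: w_sum_right intro!: sum.neutral)
qed

lemma test3:
  fixes G T T' :: "nat \<Rightarrow> pf" and a b c :: nat
  assumes G: "\<And>i. i < 8 \<Longrightarrow> oneform (G i)"
    and T: "\<gamma> = (\<Sum>k<4. T k)" "\<And>k i. k < 4 \<Longrightarrow> i < 4 \<Longrightarrow> i \<noteq> k \<Longrightarrow> kills (G i) (T k)"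
    and T': "\<gamma> = (\<Sum>k<4. T' k)" "\<And>k i. k < 4 \<Longrightarrow> i < 4 \<Longrightarrow> i \<noteq> k \<Longrightarrow> kills (G (i + 4)) (T' k)"
    and abc: "a < 8" "b < 8" "c < 8"
  shows "w (G a) (w (G b) (w (G c) \<gamma>)) = 0"
proof -
  have sw: "w (G b) (w (G c) Z) = - w (G c) (w (G b) Z)" for Z using w_swap1 G abc by blast
  have Pp: "\<And>i. i < 4 \<Longrightarrow> oneform (G i)" using G by simp
  have Pm: "\<And>i. i < 4 \<Longrightarrow> oneform ((\<lambda>i. G (i + 4)) i)" using G by simp
  have A: "w (G x) (w (G y) (w Z \<gamma>)) = 0" if "x < 4" "y < 4" for x y Z
  proof -
    have "w Z \<gamma> = (\<Sum>k<4. w Z (T k))" using T(1) by (simp add: w_sum_right)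
    moreover have "w (G x) (w (G y) (\<Sum>k<4. w Z (T k))) = 0"
      apply (rule PPsum[where P=G]) using that G T(2) by (auto intro: kills_wr)
    ultimately show ?thesis by simp
  qed
  have B: "w (G x) (w (G y) (w Z \<gamma>)) = 0" if "4 \<le> x" "4 \<le> y" "x < 8" "y < 8" for x y Z
  proof -
    have "w Z \<gamma> = (\<Sum>k<4. w Z (T' k))" using T'(1) by (simp add: w_sum_right)
    moreover have "x = (x - 4) + 4" "y = (y - 4) + 4" using that by auto
    moreover have "w (G ((x-4)+4)) (w (G ((y-4)+4)) (\<Sum>k<4. w Z (T' k))) = 0"
      apply (rule PPsum[where P="\<lambda>i. G (i + 4)"]) using that G T'(2) by (auto intro: kills_wr)
    ultimately show ?thesis by simp
  qed
  have A0: "w (G x) (w (G y) \<gamma>) = 0" if "x < 4" "y < 4" for x y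
    unfolding T(1) apply (rule PPsum[where P=G]) using that G T(2) by auto
  have B0: "w (G x) (w (G y) \<gamma>) = 0" if "4 \<le> x" "4 \<le> y" "x < 8" "y < 8" for x y
  proof -
    have "x = (x - 4) + 4" "y = (y - 4) + 4" using that by auto
    moreover have "w (G ((x-4)+4)) (w (G ((y-4)+4)) (\<Sum>k<4. T' k)) = 0"
      apply (rule PPsum[where P="\<lambda>i. G (i + 4)"]) using that G T'(2) by auto
    ultimately show ?thesis using T'(1) by simp
  qed
  have side: "(a < 4 \<and> b < 4) \<or> (4 \<le> a \<and> 4 \<le> b) \<or> (a < 4 \<and> c < 4) \<or> (4 \<le> a \<and> 4 \<le> c) \<or> (b < 4 \<and> c < 4) \<or> (4 \<le> b \<and> 4 \<le> c)"
    by auto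
  then show ?thesis
  proof (elim disjE conjE)
    assume "a < 4" "b < 4" then show ?thesis using A by simp
  next
    assume "4 \<le> a" "4 \<le> b" then show ?thesis using B abc by simp
  next
    assume "a < 4" "c < 4" then show ?thesis using A[of a c] sw by (simp add: w_uminus_right)
  next
    assume "4 \<le> a" "4 \<le> c" then show ?thesis using B[of a c] sw abc by (simp add: w_uminus_right)
  next
    assume "b < 4" "c < 4" then show ?thesis using A0[of b c] by simp
  next
    assume "4 \<le> b" "4 \<le> c" then show ?thesis using B0[of b c] abc by simp
  qed
qed

lemma sc_one[simp]: "sc 1 Z = Z" by (simp add: sc_def)
lemma sc_zero_right[simp]: "sc r 0 = 0" by (simp add: sc_def zero_fun_def)
lemma uminus_sc: "- sc r Z = sc (- r) Z" by (auto simp: sc_def fun_eq_iff)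
lemma sc_sc: "sc r (sc t Z) = sc (r * t) Z" by (auto simp: sc_def fun_eq_iff)

primrec nestf :: "pf list \<Rightarrow> pf \<Rightarrow> pf" where
  "nestf [] X = X"
| "nestf (u # us) X = w u (nestf us X)"

lemma nestf_add: "nestf us (X + Y) = nestf us X + nestf us Y"
  by (induction us) (simp_all only: nestf.simps w_add_right)
lemma nestf_sc: "nestf us (sc r X) = sc r (nestf us X)"
  by (induction us) (simp_all add: w_sc_right)
lemma nestf_zero[simp]: "nestf us 0 = 0"
  by (induction us) (simp_all only: nestf.simps w_zero_right)
lemma nestf_sum: "finite S \<Longrightarrow> nestf us (\<Sum>i\<in>S. f i) = (\<Sum>i\<in>S. nestf us (f i))"
proof (induction S rule: finite_induct)
  case (insert x F) then show ?case by (simp only: sum.insert[OF insert(1,2)] nestf_add insert(3))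
qed (simp only: sum.empty nestf_zero)

lemma nestf_comm:
  assumes "oneform u" "\<forall>v\<in>set us. oneform v"
  shows "w u (nestf us X) = sc ((-1) ^ length us) (nestf us (w u X))"
  using assms(2)
proof (induction us)
  case (Cons v us)
  then have v: "oneform v" by simp
  have "w u (nestf (v # us) X) = - w v (w u (nestf us X))"
    using w_swap1[OF assms(1) v] by simp
  also have "\<dots> = sc ((-1) ^ length (v # us)) (nestf (v # us) (w u X))"
    using Cons by (simp add: w_sc_right uminus_sc)
  finally show ?case .
qed simp

lemma span_lemma:
  fixes f :: "'a \<Rightarrow> pf" and g :: "nat \<Rightarrow> pf"
  assumes f1: "\<And>j. j \<in> A \<Longrightarrow> oneform (f j)" and g1: "\<And>i. i < N \<Longrightarrow> oneform (g i)"
    and sp: "\<And>j. j \<in> A \<Longrightarrow> \<exists>b. f j = (\<Sum>i<N. sc (b i) (g i))"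
  shows "(\<forall>is. length is = n \<and> set is \<subseteq> {..<N} \<longrightarrow> nestf (map g is) X = 0) \<Longrightarrow>
         length js = n \<Longrightarrow> set js \<subseteq> A \<Longrightarrow> nestf (map f js) X = 0"
proof (induction js arbitrary: n X)
  case Nil then show ?case by (metis list.map(1) list.size(3) empty_subsetI list.set(1))
next
  case (Cons j js)
  then obtain n' where n: "n = Suc n'" "length js = n'" by auto
  have jA: "j \<in> A" "set js \<subseteq> A" using Cons by auto
  obtain b where b: "f j = (\<Sum>i<N. sc (b i) (g i))" using sp[OF jA(1)] by blast
  have fo: "\<forall>v\<in>set (map f js). oneform v" using f1 jA by auto
  have go: "\<forall>v\<in>set (map g is). oneform v" if "set is \<subseteq> {..<N}" for "is" using g1 that by auto
  have Z: "nestf (map f js) (w (g i) X) = 0" if i: "i < N" for i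
  proof (rule Cons.IH[of n'])
    show "\<forall>is. length is = n' \<and> set is \<subseteq> {..<N} \<longrightarrow> nestf (map g is) (w (g i) X) = 0"
    proof (intro allI impI)
      fix "is" assume h: "length is = n' \<and> set is \<subseteq> {..<N}"
      have L: "length (i # is) = n \<and> set (i # is) \<subseteq> {..<N}" using h i n by auto
      have Z0: "nestf (map g (i # is)) X = 0" using Cons.prems(1) L by blast
      have Z1: "w (g i) (nestf (map g is) X) = 0" using Z0 by simp
      have "sc ((-1) ^ length is) (nestf (map g is) (w (g i) X)) = 0"
        using nestf_comm[OF g1[OF i] go, of "is" X] h Z1 by simp
      then have "sc ((-1) ^ length is) (sc ((-1) ^ length is) (nestf (map g is) (w (g i) X))) = 0" by simp
      then show "nestf (map g is) (w (g i) X) = 0" by (simp add: sc_sc power_mult_distrib[symmetric])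
    qed
  qed (use n jA in auto)
  have "nestf (map f (j # js)) X = w (f j) (nestf (map f js) X)" by simp
  also have "\<dots> = sc ((-1) ^ length js) (nestf (map f js) (w (f j) X))"
    using nestf_comm[OF f1[OF jA(1)] fo] by simp
  also have "w (f j) X = (\<Sum>i<N. sc (b i) (w (g i) X))" unfolding b by (simp add: w_sum_left w_sc_left)
  also have "nestf (map f js) \<dots> = 0" by (simp add: nestf_sum nestf_sc Z)
  finally show ?case by (simp add: sc_def zero_fun_def)
qed

definition dxf :: "8 \<Rightarrow> pf" where "dxf j = (\<lambda>I. if I = {j} then 1 else 0)"

lemma oneform_dxf: "oneform (dxf j)" by (auto simp: oneform_def dxf_def)

lemma w_dxf: "w (dxf j) Y L = (if j \<in> L then (-1) ^ card {r\<in>L - {j}. r < j} * Y (L - {j}) else 0)"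
proof -
  have "w (dxf j) Y L = (\<Sum>j'\<in>L. (-1) ^ card {r\<in>L - {j'}. r < j'} * dxf j {j'} * Y (L - {j'}))"
    by (rule w_oneform_left[OF oneform_dxf])
  also have "\<dots> = (\<Sum>j'\<in>L. if j' = j then (-1) ^ card {r\<in>L - {j}. r < j} * Y (L - {j}) else 0)"
    by (intro sum.cong) (auto simp: dxf_def)
  finally show ?thesis by (simp add: sum.delta')
qed

lemma nest_dxf: "distinct js \<Longrightarrow> set js \<subseteq> L \<Longrightarrow> \<exists>s. s \<noteq> 0 \<and> nestf (map dxf js) Y L = s * Y (L - set js)"
proof (induction js arbitrary: L)
  case Nil then show ?case by (intro exI[of _ 1]) simp
next
  case (Cons j js)
  have "distinct js" "set js \<subseteq> L - {j}" "j \<in> L" using Cons.prems by auto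
  then obtain s where s: "s \<noteq> 0" "nestf (map dxf js) Y (L - {j}) = s * Y (L - {j} - set js)" using Cons.IH by blast
  have e: "L - {j} - set js = L - set (j # js)" by auto
  show ?case using s \<open>j \<in> L\<close> unfolding e
    by (intro exI[of _ "(-1) ^ card {r\<in>L - {j}. r < j} * s"]) (simp add: w_dxf)
qed

lemma vanish:
  assumes h: "hom n Y" and n: "n \<le> 8"
    and t: "\<And>js. length js = 8 - n \<Longrightarrow> nestf (map dxf js) Y = 0"
  shows "Y = 0"
proof (rule ext)
  fix K :: "8 set"
  show "Y K = 0 K"
  proof (cases "card K = n")
    case False then show ?thesis using h by (simp add: hom_def)
  next
    case True
    define js where "js = sorted_list_of_set (UNIV - K)"
    have d: "distinct js" "set js = UNIV - K" unfolding js_def by auto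
    have "card (UNIV - K) = 8 - n" using True by (simp add: card_Diff_subset)
    then have l: "length js = 8 - n" using d distinct_card by fastforce
    obtain s where s: "s \<noteq> 0" "nestf (map dxf js) Y UNIV = s * Y (UNIV - set js)"
      using nest_dxf[OF d(1), of UNIV Y] by auto
    have "UNIV - set js = K" using d by auto
    then show ?thesis using s t[OF l] by simp
  qed
qed


lemma w_comm2: assumes "oneform a" "oneform b" shows "w (w a b) X = w X (w a b)"
proof -
  have "w (w a b) X = w a (w b X)" by (simp add: w_assoc)
  also have "\<dots> = w a (w (hat X) b)" using w_comm1[OF assms(2)] by simp
  also have "\<dots> = w (w a (hat X)) b" by (simp add: w_assoc)
  also have "w a (hat X) = w (hat (hat X)) a" by (rule w_comm1[OF assms(1)])
  also have "w (w (hat (hat X)) a) b = w X (w a b)" by (simp add: w_assoc)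
  finally show ?thesis .
qed

definition uix :: "nat \<Rightarrow> nat" where "uix k = k + 1"
definition vix :: "nat \<Rightarrow> nat" where "vix k = (k + 5) mod 8"
definition pr :: "nat \<Rightarrow> nat" where "pr n = ((n + 7) mod 8) mod 4"

lemma pr_lt: "pr n < 4" by (simp add: pr_def)
lemma uix_lt: "k < 4 \<Longrightarrow> uix k < 8" by (simp add: uix_def)
lemma vix_lt: "vix k < 8" by (simp add: vix_def)
lemma pr_uix: "k < 4 \<Longrightarrow> pr (uix k) = k" by (simp add: pr_def uix_def)
lemma lt4_cases: "(k::nat) < 4 \<Longrightarrow> k = 0 \<or> k = 1 \<or> k = 2 \<or> k = 3" by arith
lemma lt8_cases: "(k::nat) < 8 \<Longrightarrow> k = 0 \<or> k = 1 \<or> k = 2 \<or> k = 3 \<or> k = 4 \<or> k = 5 \<or> k = 6 \<or> k = 7" by arith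
lemma pr_vix: "k < 4 \<Longrightarrow> pr (vix k) = k" using lt4_cases[of k] unfolding pr_def vix_def by auto
lemma uv_ne: "k < 4 \<Longrightarrow> uix k \<noteq> vix k" using lt4_cases[of k] unfolding uix_def vix_def by auto
lemma pr_cases: "n < 8 \<Longrightarrow> n = uix (pr n) \<or> n = vix (pr n)" using lt8_cases[of n] unfolding pr_def uix_def vix_def by auto

lemma sc_uminus_right: "sc s (- Z) = sc (- s) Z" by (auto simp: sc_def fun_eq_iff)

locale lef =
  fixes E :: "nat \<Rightarrow> pf" and \<beta> :: pf
  assumes E1: "\<And>n. n < 8 \<Longrightarrow> oneform (E n)"
    and wb: "w (\<Sum>k<4. w (E (uix k)) (E (vix k))) \<beta> = 0"
begin

definition q :: "nat \<Rightarrow> pf" where "q k = w (E (uix k)) (E (vix k))"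

lemma Eu: "k < 4 \<Longrightarrow> oneform (E (uix k))" using E1 uix_lt by blast
lemma Ev: "oneform (E (vix k))" using E1 vix_lt by blast

lemma q_comm: "k < 4 \<Longrightarrow> w (q k) X = w X (q k)"
  unfolding q_def using w_comm2 Eu Ev by blast

lemma q_past: "k < 4 \<Longrightarrow> n < 8 \<Longrightarrow> w (q k) (w (E n) Y) = w (E n) (w (q k) Y)"
  by (metis q_comm w_assoc)

lemma kills_q: assumes "n < 8" shows "kills (E n) (q (pr n))"
proof -
  have p: "pr n < 4" by (rule pr_lt)
  from pr_cases[OF assms] show ?thesis
  proof
    assume "n = uix (pr n)"
    then show ?thesis unfolding q_def using kills_wl kills_self E1 assms by metis
  next
    assume "n = vix (pr n)"
    then show ?thesis unfolding q_def using kills_wr kills_self E1 assms by metis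
  qed
qed

lemma Z1: assumes "n < 8" shows "w (q (pr n)) (w (E n) Y) = 0"
proof -
  have "w (q (pr n)) (w (E n) Y) = w (w (E n) (q (pr n))) Y"
    using q_comm[OF pr_lt] by (simp add: w_assoc[symmetric])
  then show ?thesis using kills_q[OF assms] by (simp add: kills_def)
qed

lemma qq: assumes k: "k < 4" shows "w (q k) (w (q k) Y) = 0"
proof -
  have e: "w (E (vix k)) (q k) = 0" using kills_q[OF vix_lt, of k] pr_vix[OF k] by (simp add: kills_def)
  have "w (q k) X = w (E (uix k)) (w (E (vix k)) X)" for X by (simp add: q_def w_assoc)
  then have "w (q k) (q k) = 0" using e by simp
  then show ?thesis by (simp add: w_assoc[symmetric])
qed

lemma qswap: "x < 4 \<Longrightarrow> y < 4 \<Longrightarrow> w (q x) (w (q y) Y) = w (q y) (w (q x) Y)"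
  by (metis q_comm w_assoc)

definition R :: "nat \<Rightarrow> nat \<Rightarrow> nat \<Rightarrow> nat \<Rightarrow> pf" where
  "R k a b c = w (q k) (w (E a) (w (E b) (w (E c) \<beta>)))"

lemma R_swap12: "a < 8 \<Longrightarrow> b < 8 \<Longrightarrow> R k a b c = - R k b a c"
  unfolding R_def using w_swap1[OF E1 E1, of a b] by (simp add: w_uminus_right)
lemma R_swap23: "b < 8 \<Longrightarrow> c < 8 \<Longrightarrow> R k a b c = - R k a c b"
  unfolding R_def using w_swap1[OF E1 E1, of b c] by (simp add: w_uminus_right)

lemma caseI: assumes "k < 4" "a < 8" "b < 8" "c < 8" "pr a = k \<or> pr b = k \<or> pr c = k"
  shows "R k a b c = 0"
proof -
  have ab: "R k a b c = w (E a) (w (q k) (w (E b) (w (E c) \<beta>)))" unfolding R_def using q_past assms by simp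
  have ac: "R k a b c = w (E a) (w (E b) (w (q k) (w (E c) \<beta>)))" unfolding ab using q_past assms by simp
  from assms(5) show ?thesis
  proof (elim disjE)
    assume "pr a = k" then show ?thesis unfolding R_def using Z1 assms by blast
  next
    assume "pr b = k" then show ?thesis unfolding ab using Z1[of b "w (E c) \<beta>"] assms by simp
  next
    assume "pr c = k" then show ?thesis unfolding ac using Z1[of c \<beta>] assms by simp
  qed
qed

lemma omega_expand: "w (\<Sum>t<4. q t) Y = (\<Sum>t<4. w (q t) Y)"
  by (simp add: w_sum_left)

lemma sum4: fixes i j l m :: nat assumes "i < 4" "j < 4" "l < 4" "m < 4" "i \<noteq> j" "i \<noteq> l" "i \<noteq> m" "j \<noteq> l" "j \<noteq> m" "l \<noteq> m"
  shows "(\<Sum>t<4. f t) = f i + f j + f l + (f m :: pf)"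
proof -
  have "{..<4::nat} = {i, j, l, m}"
  proof -
    have "{i, j, l, m} \<subseteq> {..<4}" using assms by auto
    moreover have "card {i, j, l, m} = 4" using assms by auto
    ultimately show ?thesis by (metis card_lessThan card_subset_eq finite_lessThan)
  qed
  then have "(\<Sum>t<4. f t) = sum f {i, j, l, m}" by (simp only:)
  also have "\<dots> = f i + f j + f l + f m" using assms by (simp add: add.assoc)
  finally show ?thesis .
qed

lemma fourth: fixes i j l :: nat assumes "i < 4" "j < 4" "l < 4" "i \<noteq> j" "i \<noteq> l" "j \<noteq> l"
  obtains m where "m < 4" "m \<noteq> i" "m \<noteq> j" "m \<noteq> l"
proof -
  have "\<not> {..<4::nat} \<subseteq> {i, j, l}"
  proof
    assume "{..<4::nat} \<subseteq> {i, j, l}"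
    then have "card {..<4::nat} \<le> card {i, j, l}" by (intro card_mono) auto
    moreover have "card {i, j, l} = 3" using assms by auto
    ultimately show False by simp
  qed
  then obtain m where "m \<in> {..<4::nat}" "m \<notin> {i, j, l}" by blast
  then show ?thesis using that by simp
qed

lemma eqn: assumes x: "x < 4" and s: "s < 8"
  shows "(\<Sum>t<4. w (q x) (w (q t) (w (E s) \<beta>))) = 0"
proof -
  have "w (\<Sum>t<4. q t) \<beta> = 0" using wb by (simp add: q_def)
  then have "(\<Sum>t<4. w (q t) \<beta>) = 0" by (simp add: w_sum_left)
  then have "w (q x) (w (E s) (\<Sum>t<4. w (q t) \<beta>)) = 0" by simp
  moreover have "w (q x) (w (E s) (\<Sum>t<4. w (q t) \<beta>)) = (\<Sum>t<4. w (q x) (w (q t) (w (E s) \<beta>)))"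
    by (simp add: w_sum_right q_past s)
  ultimately show ?thesis by simp
qed

lemma L3: assumes i: "i < 4" and j: "j < 4" and s: "s < 8" and d: "i \<noteq> j" "i \<noteq> pr s" "j \<noteq> pr s"
  shows "w (q i) (w (q j) (w (E s) \<beta>)) = 0"
proof -
  define l where "l = pr s"
  have l: "l < 4" unfolding l_def by (rule pr_lt)
  define F where "F x y = w (q x) (w (q y) (w (E s) \<beta>))" for x y
  have Fsym: "F x y = F y x" if "x < 4" "y < 4" for x y unfolding F_def using qswap that by simp
  have Fdiag: "F x x = 0" if "x < 4" for x unfolding F_def using qq that by simp
  have Fl: "F x l = 0" for x unfolding F_def l_def using Z1[OF s] by simp
  have E: "(\<Sum>t<4. F x t) = 0" if "x < 4" for x unfolding F_def using eqn[OF that s] .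
  obtain m where m: "m < 4" "m \<noteq> i" "m \<noteq> j" "m \<noteq> l" using fourth[OF i j l d(1) d(2)[folded l_def] d(3)[folded l_def]] by blast
  have S: "(\<Sum>t<4. F x t) = F x i + F x j + F x l + F x m" for x
    by (rule sum4) (use i j l m d l_def in auto)
  have e1: "F i j + F i m = 0" using E[OF i] S[of i] Fdiag[OF i] Fl[of i] by simp
  have e2: "F i j + F j m = 0" using E[OF j] S[of j] Fdiag[OF j] Fl[of j] Fsym[OF i j] by simp
  have e3: "F i m + F j m = 0" using E[OF m(1)] S[of m] Fdiag[OF m(1)] Fl[of m] Fsym[OF i m(1)] Fsym[OF j m(1)]
    by (simp add: add.commute)
  have "F i j = 0"
  proof (rule ext)
    fix K
    have "F i j K + F i m K = 0" "F i j K + F j m K = 0" "F i m K + F j m K = 0"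
      using fun_cong[OF e1, of K] fun_cong[OF e2, of K] fun_cong[OF e3, of K] by auto
    then show "F i j K = 0 K" by simp
  qed
  then show ?thesis unfolding F_def .
qed

lemma pairq: assumes "a < 8" "b < 8" "a \<noteq> b" "pr a = pr b"
  shows "w (E a) (w (E b) Y) = w (q (pr a)) Y \<or> w (E a) (w (E b) Y) = - w (q (pr a)) Y"
proof -
  have k: "pr a < 4" by (rule pr_lt)
  have qd: "w (q (pr a)) Y = w (E (uix (pr a))) (w (E (vix (pr a))) Y)" by (simp add: q_def w_assoc)
  from pr_cases[OF assms(1)] pr_cases[OF assms(2)] assms(3,4) show ?thesis
  proof (elim disjE)
    assume "a = uix (pr a)" "b = vix (pr b)" then show ?thesis using qd assms(4) by simp
  next
    assume "a = vix (pr a)" "b = uix (pr b)"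
    then show ?thesis using qd assms(4) w_swap1[OF E1 E1, of a b Y] assms(1,2) by simp
  qed (metis)+
qed

lemma caseIII: assumes k: "k < 4" and abc: "a < 8" "b < 8" "c < 8" and p: "pr a = pr b" "pr a \<noteq> k" "pr c \<noteq> k"
  shows "R k a b c = 0"
proof (cases "a = b")
  case True
  then show ?thesis unfolding R_def using w_self1[OF E1[OF abc(1)]] by (simp add: w_assoc[symmetric])
next
  case False
  define j where "j = pr a"
  have j: "j < 4" unfolding j_def by (rule pr_lt)
  have inner: "w (q k) (w (q j) (w (E c) \<beta>)) = 0"
  proof (cases "pr c = j")
    case True then show ?thesis using Z1[OF abc(3), of \<beta>] by simp
  next
    case False
    then show ?thesis using L3[OF k j abc(3)] p j_def by auto
  qed
  from pairq[OF abc(1,2) False p(1), of "w (E c) \<beta>"] show ?thesis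
    unfolding R_def j_def[symmetric] using inner by (auto simp: w_uminus_right)
qed

lemma caseII: assumes k: "k < 4" and abc: "a < 8" "b < 8" "c < 8"
  and d: "pr a \<noteq> k" "pr b \<noteq> k" "pr c \<noteq> k" "pr a \<noteq> pr b" "pr a \<noteq> pr c" "pr b \<noteq> pr c"
  shows "R k a b c = 0"
proof -
  have "w (\<Sum>t<4. q t) \<beta> = 0" using wb by (simp add: q_def)
  then have "w (E a) (w (E b) (w (E c) (w (\<Sum>t<4. q t) \<beta>))) = 0" by simp
  moreover have "w (E a) (w (E b) (w (E c) (w (\<Sum>t<4. q t) \<beta>))) = (\<Sum>t<4. R t a b c)"
    unfolding R_def by (simp add: w_sum_left w_sum_right q_past abc)
  ultimately have "(\<Sum>t<4. R t a b c) = 0" by simp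
  moreover have "(\<Sum>t<4. R t a b c) = R k a b c + R (pr a) a b c + R (pr b) a b c + R (pr c) a b c"
    by (rule sum4) (use k d pr_lt in auto)
  moreover have "R (pr a) a b c = 0" "R (pr b) a b c = 0" "R (pr c) a b c = 0"
    using caseI[OF pr_lt abc] by auto
  ultimately show ?thesis by simp
qed

lemma R0: assumes k: "k < 4" and abc: "a < 8" "b < 8" "c < 8" shows "R k a b c = 0"
proof (cases "pr a = k \<or> pr b = k \<or> pr c = k")
  case True then show ?thesis using caseI[OF k abc] by blast
next
  case False
  show ?thesis
  proof (cases "pr a = pr b")
    case True then show ?thesis using caseIII[OF k abc] False by auto
  next
    case ab: False
    show ?thesis
    proof (cases "pr a = pr c")
      case True
      have "R k a c b = 0" using caseIII[OF k abc(1,3,2)] False True by auto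
      then show ?thesis using R_swap23[OF abc(2,3), of k a] by simp
    next
      case ac: False
      show ?thesis
      proof (cases "pr b = pr c")
        case True
        have "R k b c a = 0" using caseIII[OF k abc(2,3,1)] False True by auto
        then show ?thesis using R_swap12[OF abc(1,2), of k c] R_swap23[OF abc(1,3), of k b] by simp
      next
        case False
        then show ?thesis using caseII[OF k abc] ab ac \<open>\<not> (pr a = k \<or> pr b = k \<or> pr c = k)\<close> by auto
      qed
    qed
  qed
qed

lemma move: assumes "set L \<subseteq> {..<8}" "x \<in> set L"
  shows "\<exists>s. nestf (map E L) Y = sc s (w (E x) (nestf (map E (remove1 x L)) Y))"
  using assms
proof (induction L)
  case (Cons y L)
  show ?case
  proof (cases "x = y")
    case True then show ?thesis by (intro exI[of _ 1]) simp
  next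
    case False
    then have xL: "x \<in> set L" "set L \<subseteq> {..<8}" "y < 8" "x < 8" using Cons.prems by auto
    then obtain s where s: "nestf (map E L) Y = sc s (w (E x) (nestf (map E (remove1 x L)) Y))" using Cons.IH by blast
    have "nestf (map E (y # L)) Y = sc (- s) (w (E x) (w (E y) (nestf (map E (remove1 x L)) Y)))"
      using s w_swap1[OF E1[OF xL(3)] E1[OF xL(4)]] by (simp add: w_sc_right sc_uminus_right)
    then show ?thesis using False by auto
  qed
qed simp

lemma nd: "\<not> distinct L \<Longrightarrow> \<exists>x. x \<in> set (remove1 x L)"
proof (induction L)
  case (Cons y L)
  show ?case
  proof (cases "y \<in> set L")
    case True then show ?thesis by (intro exI[of _ y]) simp
  next
    case False
    then have "\<not> distinct L" using Cons.prems by simp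
    then obtain x where "x \<in> set (remove1 x L)" using Cons.IH by blast
    moreover have "x \<noteq> y" using False calculation by (meson notin_set_remove1)
    ultimately show ?thesis by (intro exI[of _ x]) simp
  qed
qed simp

lemma lef_main: assumes "length L = 5" "set L \<subseteq> {..<8}" shows "nestf (map E L) \<beta> = 0"
proof (cases "distinct L")
  case False
  then obtain x where x: "x \<in> set (remove1 x L)" using nd by blast
  then have xL: "x \<in> set L" by (meson notin_set_remove1)
  have x8: "x < 8" using xL assms by auto
  have sL: "set (remove1 x L) \<subseteq> {..<8}" using assms(2) by (meson set_remove1_subset subset_trans)
  obtain s where s: "nestf (map E L) \<beta> = sc s (w (E x) (nestf (map E (remove1 x L)) \<beta>))"
    using move[OF assms(2) xL] by blast
  obtain s' where s': "nestf (map E (remove1 x L)) \<beta> = sc s' (w (E x) (nestf (map E (remove1 x (remove1 x L))) \<beta>))"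
    using move[OF sL x] by blast
  show ?thesis unfolding s s' using w_self1[OF E1[OF x8]] by (simp add: w_sc_right w_assoc[symmetric])
next
  case True
  have "\<not> inj_on pr (set L)"
  proof
    assume "inj_on pr (set L)"
    then have "card (set L) \<le> card {..<4::nat}" by (intro card_inj_on_le) (auto simp: pr_lt)
    then show False using True assms distinct_card by fastforce
  qed
  then obtain a b where ab: "a \<in> set L" "b \<in> set L" "a \<noteq> b" "pr a = pr b" unfolding inj_on_def by blast
  have a8: "a < 8" "b < 8" using ab assms by auto
  have sL: "set (remove1 a L) \<subseteq> {..<8}" using assms(2) by (meson set_remove1_subset subset_trans)
  have bL: "b \<in> set (remove1 a L)" using ab True by simp
  define L'' where "L'' = remove1 b (remove1 a L)"
  have sL'': "set L'' \<subseteq> {..<8}" using sL unfolding L''_def by (meson set_remove1_subset subset_trans)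
  have lL'': "length L'' = 3" unfolding L''_def using ab bL assms by (simp add: length_remove1)
  then obtain c1 c2 c3 where c: "L'' = [c1, c2, c3]" by (auto simp: length_Suc_conv numeral_3_eq_3)
  have c8: "c1 < 8" "c2 < 8" "c3 < 8" using sL'' c by auto
  obtain s where s: "nestf (map E L) \<beta> = sc s (w (E a) (nestf (map E (remove1 a L)) \<beta>))"
    using move[OF assms(2) ab(1)] by blast
  obtain s' where s': "nestf (map E (remove1 a L)) \<beta> = sc s' (w (E b) (nestf (map E L'') \<beta>))"
    using move[OF sL bL] unfolding L''_def by blast
  have R: "w (q (pr a)) (nestf (map E L'') \<beta>) = 0" using R0[OF pr_lt c8] unfolding c R_def by simp
  from pairq[OF a8 ab(3,4), of "nestf (map E L'') \<beta>"] R
  have "w (E a) (w (E b) (nestf (map E L'') \<beta>)) = 0" by (auto simp: w_uminus_right)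
  then show ?thesis unfolding s s' by (simp add: w_sc_right)
qed

end


definition sig :: "8 \<Rightarrow> 8 set \<Rightarrow> nat" where "sig j K = card {i\<in>K. i < j}"

lemma inv_insert_left: "j \<notin> I \<Longrightarrow> inversions (insert j I) R = inversions I R + card {r\<in>R. r < j}"
  using inv_Un_left[of "{j}" I R] inv_single_left[of j R] by simp

lemma inv_insert_right: "j \<notin> R \<Longrightarrow> inversions I (insert j R) = inversions I R + card {i\<in>I. j < i}"
  using inv_Un_right[of "{j}" R I] inv_single_right[of I j] by simp

lemma card_lt_Un: "A \<inter> B = {} \<Longrightarrow> card {i\<in>A \<union> B. i < (j::8)} = card {i\<in>A. i < j} + card {i\<in>B. i < j}"
proof -
  assume "A \<inter> B = {}"
  moreover have "{i\<in>A \<union> B. i < j} = {i\<in>A. i < j} \<union> {i\<in>B. i < j}" by auto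
  ultimately show ?thesis by (simp add: card_Un_disjoint disjoint_iff)
qed

lemma sig_split: assumes "j \<in> K" "I \<subseteq> K - {j}"
  shows "sig j K = card {i\<in>I. i < j} + card {r\<in>K - {j} - I. r < j}"
proof -
  have e: "{i\<in>K. i < j} = {i\<in>I \<union> (K - {j} - I). i < j}" using assms by auto
  show ?thesis unfolding sig_def e by (rule card_lt_Un) auto
qed

lemma leib_comb:
  fixes A B :: pf and dA dB :: "8 \<Rightarrow> 8 set \<Rightarrow> real"
  shows "(\<Sum>j\<in>K. (-1) ^ sig j K * (\<Sum>I\<in>Pow (K - {j}). (-1) ^ inversions I (K - {j} - I) *
            (dA j I * B (K - {j} - I) + A I * dB j (K - {j} - I))))
       = w (\<lambda>L. \<Sum>j\<in>L. (-1) ^ sig j L * dA j (L - {j})) B K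
         + w (hat A) (\<lambda>L. \<Sum>j\<in>L. (-1) ^ sig j L * dB j (L - {j})) K"
proof -
  define F1 where "F1 j I = (-1::real) ^ sig j K * (-1) ^ inversions I (K - {j} - I) * dA j I * B (K - {j} - I)" for j I
  define F2 where "F2 j I = (-1::real) ^ sig j K * (-1) ^ inversions I (K - {j} - I) * A I * dB j (K - {j} - I)" for j I
  have L: "(\<Sum>j\<in>K. (-1) ^ sig j K * (\<Sum>I\<in>Pow (K - {j}). (-1) ^ inversions I (K - {j} - I) *
            (dA j I * B (K - {j} - I) + A I * dB j (K - {j} - I))))
        = (\<Sum>j\<in>K. \<Sum>I\<in>Pow (K - {j}). F1 j I) + (\<Sum>j\<in>K. \<Sum>I\<in>Pow (K - {j}). F2 j I)"
    unfolding F1_def F2_def by (simp add: sum_distrib_left algebra_simps sum.distrib)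
  have R1: "w (\<lambda>L. \<Sum>j\<in>L. (-1) ^ sig j L * dA j (L - {j})) B K = (\<Sum>j\<in>K. \<Sum>I\<in>Pow (K - {j}). F1 j I)"
  proof -
    have "w (\<lambda>L. \<Sum>j\<in>L. (-1) ^ sig j L * dA j (L - {j})) B K
        = (\<Sum>I'\<in>Pow K. \<Sum>j\<in>I'. (-1) ^ inversions I' (K - I') * ((-1) ^ sig j I' * dA j (I' - {j})) * B (K - I'))"
      unfolding w_def by (simp add: sum_distrib_left sum_distrib_right)
    also have "\<dots> = (\<Sum>(I',j)\<in>Sigma (Pow K) (\<lambda>I'. I'). (-1) ^ inversions I' (K - I') * ((-1) ^ sig j I' * dA j (I' - {j})) * B (K - I'))"
      by (rule sum.Sigma) auto
    also have "\<dots> = (\<Sum>(j,I)\<in>Sigma K (\<lambda>j. Pow (K - {j})). F1 j I)"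
    proof (rule sum.reindex_bij_witness[where i="\<lambda>(j,I). (insert j I, j)" and j="\<lambda>(I',j). (j, I' - {j})"], goal_cases)
      case (5 p)
      obtain I' j where pe: "p = (I', j)" by (cases p)
      have h: "I' \<subseteq> K" "j \<in> I'" using 5 pe by auto
      define I where "I = I' - {j}"
      have I': "I' = insert j I" "j \<notin> I" unfolding I_def using h by auto
      have jK: "j \<in> K" "I \<subseteq> K - {j}" using h I' by auto
      have e1: "K - I' = K - {j} - I" using I' by auto
      have e2: "sig j I' = card {i\<in>I. i < j}" unfolding sig_def I' by (rule arg_cong[where f=card]) auto
      have "inversions (insert j I) (K - {j} - I) = inversions I (K - {j} - I) + card {r\<in>K - {j} - I. r < j}"
        by (rule inv_insert_left[OF I'(2)])
      then have "inversions I' (K - I') = inversions I (K - {j} - I) + card {r\<in>K - {j} - I. r < j}"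
        using e1 I'(1) by simp
      then have "sig j K + inversions I (K - {j} - I) = inversions I' (K - I') + sig j I'"
        using sig_split[OF jK] e2 by simp
      then have s: "(-1::real) ^ sig j K * (-1) ^ inversions I (K - {j} - I) = (-1) ^ inversions I' (K - I') * (-1) ^ sig j I'"
        by (metis power_add)
      show ?case unfolding pe F1_def using e1 s I_def by (simp add: algebra_simps)
    qed auto
    also have "\<dots> = (\<Sum>j\<in>K. \<Sum>I\<in>Pow (K - {j}). F1 j I)"
      by (rule sum.Sigma[symmetric]) auto
    finally show ?thesis .
  qed
  have R2: "w (hat A) (\<lambda>L. \<Sum>j\<in>L. (-1) ^ sig j L * dB j (L - {j})) K = (\<Sum>j\<in>K. \<Sum>I\<in>Pow (K - {j}). F2 j I)"
  proof -
    have "w (hat A) (\<lambda>L. \<Sum>j\<in>L. (-1) ^ sig j L * dB j (L - {j})) K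
        = (\<Sum>I\<in>Pow K. \<Sum>j\<in>K - I. (-1) ^ inversions I (K - I) * ((-1) ^ card I * A I) * ((-1) ^ sig j (K - I) * dB j (K - I - {j})))"
      unfolding w_def hat_def by (simp add: sum_distrib_left sum_distrib_right)
    also have "\<dots> = (\<Sum>(I,j)\<in>Sigma (Pow K) (\<lambda>I. K - I). (-1) ^ inversions I (K - I) * ((-1) ^ card I * A I) * ((-1) ^ sig j (K - I) * dB j (K - I - {j})))"
      by (rule sum.Sigma) auto
    also have "\<dots> = (\<Sum>(j,I)\<in>Sigma K (\<lambda>j. Pow (K - {j})). F2 j I)"
    proof (rule sum.reindex_bij_witness[where i="\<lambda>(j,I). (I, j)" and j="\<lambda>(I,j). (j, I)"], goal_cases)
      case (5 p)
      obtain I j where pe: "p = (I, j)" by (cases p)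
      have h: "I \<subseteq> K" "j \<in> K" "j \<notin> I" using 5 pe by auto
      have jK: "j \<in> K" "I \<subseteq> K - {j}" using h by auto
      define R where "R = K - {j} - I"
      have e1: "K - I = insert j R" "j \<notin> R" "K - I - {j} = R" unfolding R_def using h by auto
      have e2: "sig j (K - I) = card {r\<in>R. r < j}" unfolding sig_def e1(1) by (rule arg_cong[where f=card]) auto
      have e3: "inversions I (K - I) = inversions I R + card {i\<in>I. j < i}"
        unfolding e1(1) by (rule inv_insert_right[OF e1(2)])
      have e4: "card I = card {i\<in>I. i < j} + card {i\<in>I. j < i}" by (rule card_lt_gt[OF h(3)])
      have "inversions I (K - I) + card I + sig j (K - I) = (sig j K + inversions I R) + 2 * card {i\<in>I. j < i}"
        using sig_split[OF jK] e2 e3 e4 R_def by simp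
      then have s: "(-1::real) ^ inversions I (K - I) * (-1) ^ card I * (-1) ^ sig j (K - I) = (-1) ^ sig j K * (-1) ^ inversions I R"
        by (metis (no_types, lifting) power_add power_mult neg_one_even_power even_two_times_div_two dvd_triv_left mult_1_right)
      show ?case unfolding pe F2_def using e1 s R_def by (simp add: algebra_simps)
    qed auto
    also have "\<dots> = (\<Sum>j\<in>K. \<Sum>I\<in>Pow (K - {j}). F2 j I)"
      by (rule sum.Sigma[symmetric]) auto
    finally show ?thesis .
  qed
  show ?thesis unfolding L R1 R2 ..
qed


definition dfa :: "(8 set \<Rightarrow> real^8 \<Rightarrow> 'a::real_normed_vector) \<Rightarrow> real^8 \<Rightarrow> bool" where
  "dfa a x \<longleftrightarrow> (\<forall>I j. (\<lambda>t. a I (x + t *\<^sub>R axis j 1)) differentiable (at (0::real)))"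

abbreviation "ldiff f x j \<equiv> (\<lambda>t::real. f (x + t *\<^sub>R axis j 1)) differentiable (at 0)"

lemma partial_hvd: assumes "ldiff f x j"
  shows "((\<lambda>t. f (x + t *\<^sub>R axis j 1)) has_vector_derivative partial j f x) (at 0)"
  unfolding partial_def using assms vector_derivative_works by blast

lemma hvd_diff: "(f has_vector_derivative D) F \<Longrightarrow> f differentiable F"
  unfolding differentiable_def has_vector_derivative_def by blast

lemma partial_add:
  fixes f g :: "real^8 \<Rightarrow> 'a::real_normed_vector"
  assumes "ldiff f x j" "ldiff g x j"
  shows "partial j (\<lambda>y. f y + g y) x = partial j f x + partial j g x"
  unfolding partial_def[of j "\<lambda>y. f y + g y"]
  by (rule vector_derivative_at) (rule has_vector_derivative_add[OF partial_hvd[OF assms(1)] partial_hvd[OF assms(2)]])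

lemma partial_diff:
  fixes f g :: "real^8 \<Rightarrow> 'a::real_normed_vector"
  assumes "ldiff f x j" "ldiff g x j"
  shows "partial j (\<lambda>y. f y - g y) x = partial j f x - partial j g x"
  unfolding partial_def[of j "\<lambda>y. f y - g y"]
  by (rule vector_derivative_at) (rule has_vector_derivative_diff[OF partial_hvd[OF assms(1)] partial_hvd[OF assms(2)]])

lemma partial_cmult:
  fixes f :: "real^8 \<Rightarrow> 'a::real_normed_algebra"
  assumes "ldiff f x j"
  shows "partial j (\<lambda>y. c * f y) x = c * partial j f x"
  unfolding partial_def[of j "\<lambda>y. c * f y"]
  by (rule vector_derivative_at) (rule has_vector_derivative_mult_right[OF partial_hvd[OF assms(1)]])

lemma partial_mult:
  fixes f g :: "real^8 \<Rightarrow> real"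
  assumes "ldiff f x j" "ldiff g x j"
  shows "partial j (\<lambda>y. f y * g y) x = partial j f x * g x + f x * partial j g x"
proof -
  have "((\<lambda>t. f (x + t *\<^sub>R axis j 1) * g (x + t *\<^sub>R axis j 1)) has_vector_derivative
      (f (x + 0 *\<^sub>R axis j 1) * partial j g x + partial j f x * g (x + 0 *\<^sub>R axis j 1))) (at 0)"
    by (rule has_vector_derivative_mult[OF partial_hvd[OF assms(1)] partial_hvd[OF assms(2)]])
  then have "partial j (\<lambda>y. f y * g y) x = f (x + 0 *\<^sub>R axis j 1) * partial j g x + partial j f x * g (x + 0 *\<^sub>R axis j 1)"
    unfolding partial_def[of j "\<lambda>y. f y * g y"] by (rule vector_derivative_at)
  then show ?thesis by simp
qed

lemma partial_sum:
  fixes f :: "'i \<Rightarrow> real^8 \<Rightarrow> 'a::real_normed_vector"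
  assumes "\<And>i. i \<in> S \<Longrightarrow> ldiff (f i) x j"
  shows "partial j (\<lambda>y. \<Sum>i\<in>S. f i y) x = (\<Sum>i\<in>S. partial j (f i) x)"
  unfolding partial_def[of j "\<lambda>y. \<Sum>i\<in>S. f i y"]
  by (rule vector_derivative_at) (rule has_vector_derivative_sum[OF partial_hvd[OF assms]])

lemma partial_of_real:
  fixes f :: "real^8 \<Rightarrow> real"
  assumes "ldiff f x j"
  shows "partial j (\<lambda>y. complex_of_real (f y)) x = complex_of_real (partial j f x)"
  unfolding partial_def[of j "\<lambda>y. complex_of_real (f y)"]
  by (rule vector_derivative_at) (rule has_vector_derivative_of_real,
      simp add: has_real_derivative_iff_has_vector_derivative partial_hvd[OF assms])

lemma ldiff_of_real: assumes "ldiff f x j" shows "ldiff (\<lambda>y. complex_of_real ((f::real^8\<Rightarrow>real) y)) x j"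
proof -
  have "((\<lambda>t. f (x + t *\<^sub>R axis j 1)) has_real_derivative partial j f x) (at 0)"
    unfolding has_real_derivative_iff_has_vector_derivative by (rule partial_hvd[OF assms])
  then show ?thesis by (rule hvd_diff[OF has_vector_derivative_of_real])
qed

lemma partial_zero: "(\<And>y. f y = 0) \<Longrightarrow> partial j f x = 0"
proof -
  assume "\<And>y. f y = 0"
  then have "f = (\<lambda>y. 0)" by auto
  then show ?thesis by (simp add: partial_def)
qed

lemma dfa_fadd: "dfa a x \<Longrightarrow> dfa b x \<Longrightarrow> dfa (fadd a b) x"
  unfolding dfa_def fadd_def by auto
lemma dfa_fsub: "dfa a x \<Longrightarrow> dfa b x \<Longrightarrow> dfa (fsub a b) x"
  unfolding dfa_def fsub_def by auto
lemma dfa_fscale: "dfa a x \<Longrightarrow> dfa (fscale c a) x"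
  unfolding dfa_def fscale_def by (auto intro!: differentiable_mult)
lemma dfa_cform: "dfa a x \<Longrightarrow> dfa (cform a) x"
  unfolding dfa_def cform_def by (auto intro!: ldiff_of_real)
lemma dfa_wedge: "dfa (a::real dform) x \<Longrightarrow> dfa b x \<Longrightarrow> dfa (wedge a b) x"
  unfolding dfa_def wedge_def by (auto intro!: differentiable_sum differentiable_mult)

lemma extd_fadd: "dfa a x \<Longrightarrow> dfa b x \<Longrightarrow> ext_d (fadd a b) K x = ext_d a K x + ext_d b K x"
  unfolding ext_d_def fadd_def by (simp add: partial_add dfa_def sum.distrib algebra_simps)
lemma extd_fsub: "dfa a x \<Longrightarrow> dfa b x \<Longrightarrow> ext_d (fsub a b) K x = ext_d a K x - ext_d b K x"
  unfolding ext_d_def fsub_def by (simp add: partial_diff dfa_def sum_subtractf algebra_simps)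
lemma extd_fscale: "dfa a x \<Longrightarrow> ext_d (fscale c a) K x = c * ext_d a K x"
  unfolding ext_d_def fscale_def by (simp add: partial_cmult dfa_def sum_distrib_left algebra_simps)
lemma extd_cform: "dfa a x \<Longrightarrow> ext_d (cform a) K x = complex_of_real (ext_d a K x)"
  unfolding ext_d_def cform_def by (simp add: partial_of_real dfa_def)

lemma leibniz:
  fixes a b :: "real dform"
  assumes "dfa a x" "dfa b x"
  shows "(\<lambda>K. ext_d (wedge a b) K x) = w (\<lambda>K. ext_d a K x) (\<lambda>I. b I x) + w (hat (\<lambda>I. a I x)) (\<lambda>K. ext_d b K x)"
proof (rule ext)
  fix K :: "8 set"
  have pw: "partial j (wedge a b L) x = (\<Sum>I\<in>Pow L. (-1) ^ inversions I (L - I) *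
            (partial j (a I) x * b (L - I) x + a I x * partial j (b (L - I)) x))" for j L
  proof -
    have "wedge a b L = (\<lambda>y. \<Sum>I\<in>Pow L. (-1) ^ inversions I (L - I) * a I y * b (L - I) y)"
      unfolding wedge_def by simp
    then have "partial j (wedge a b L) x = (\<Sum>I\<in>Pow L. partial j (\<lambda>y. (-1) ^ inversions I (L - I) * a I y * b (L - I) y) x)"
      using assms by (simp add: partial_sum dfa_def)
    also have "\<dots> = (\<Sum>I\<in>Pow L. (-1) ^ inversions I (L - I) *
            (partial j (a I) x * b (L - I) x + a I x * partial j (b (L - I)) x))"
    proof (intro sum.cong refl)
      fix I
      have d1: "ldiff (a I) x j" "ldiff (b (L - I)) x j" using assms by (auto simp: dfa_def)
      have d2: "ldiff (\<lambda>y. (-1) ^ inversions I (L - I) * a I y) x j" using d1 by auto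
      have "partial j (\<lambda>y. (-1) ^ inversions I (L - I) * a I y * b (L - I) y) x
          = partial j (\<lambda>y. (-1) ^ inversions I (L - I) * a I y) x * b (L - I) x + (-1) ^ inversions I (L - I) * a I x * partial j (b (L - I)) x"
        by (rule partial_mult[OF d2 d1(2)])
      also have "partial j (\<lambda>y. (-1) ^ inversions I (L - I) * a I y) x = (-1) ^ inversions I (L - I) * partial j (a I) x"
        by (rule partial_cmult[OF d1(1)])
      finally show "partial j (\<lambda>y. (-1) ^ inversions I (L - I) * a I y * b (L - I) y) x
         = (-1) ^ inversions I (L - I) * (partial j (a I) x * b (L - I) x + a I x * partial j (b (L - I)) x)"
        by (simp add: algebra_simps)
    qed
    finally show ?thesis .
  qed
  have "ext_d (wedge a b) K x = (\<Sum>j\<in>K. (-1) ^ sig j K * (\<Sum>I\<in>Pow (K - {j}). (-1) ^ inversions I (K - {j} - I) *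
            (partial j (a I) x * b (K - {j} - I) x + a I x * partial j (b (K - {j} - I)) x)))"
    unfolding ext_d_def sig_def pw ..
  also have "\<dots> = w (\<lambda>L. \<Sum>j\<in>L. (-1) ^ sig j L * partial j (a (L - {j})) x) (\<lambda>I. b I x) K
         + w (hat (\<lambda>I. a I x)) (\<lambda>L. \<Sum>j\<in>L. (-1) ^ sig j L * partial j (b (L - {j})) x) K"
    by (rule leib_comb[of K "\<lambda>j I. partial j (a I) x" "\<lambda>I. b I x" "\<lambda>I. a I x" "\<lambda>j I. partial j (b I) x"])
  finally show "ext_d (wedge a b) K x = (w (\<lambda>K. ext_d a K x) (\<lambda>I. b I x) + w (hat (\<lambda>I. a I x)) (\<lambda>K. ext_d b K x)) K"
    unfolding ext_d_def sig_def by simp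
qed


lemma coframe_span:
  fixes M :: "nat \<Rightarrow> 8 \<Rightarrow> real"
  assumes indep: "\<forall>c::nat \<Rightarrow> real. (\<forall>j. (\<Sum>i<8. c i * M i j) = 0) \<longrightarrow> (\<forall>i<8. c i = 0)"
  shows "\<exists>b. \<forall>j'. (\<Sum>i<8. b i * M i j') = (if j' = j then 1 else 0)"
proof -
  obtain idx :: "8 \<Rightarrow> nat" where bij: "bij_betw idx UNIV {..<8}"
    using finite_same_card_bij[of "UNIV :: 8 set" "{..<8::nat}"] by auto
  define F :: "real^8 \<Rightarrow> real^8" where "F v = (\<chi> j'. \<Sum>i\<in>UNIV. v $ i * M (idx i) j')" for v
  define cof :: "real^8 \<Rightarrow> nat \<Rightarrow> real" where "cof v n = (if n < 8 then v $ (inv_into UNIV idx n) else 0)" for v n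
  have reidx: "(\<Sum>n<8. cof v n * M n j') = (\<Sum>i\<in>UNIV. v $ i * M (idx i) j')" for v j'
  proof -
    have "(\<Sum>n<8. cof v n * M n j') = (\<Sum>i\<in>UNIV. cof v (idx i) * M (idx i) j')"
      using sum.reindex_bij_betw[OF bij, of "\<lambda>n. cof v n * M n j'"] by simp
    also have "\<dots> = (\<Sum>i\<in>UNIV. v $ i * M (idx i) j')"
      using bij by (intro sum.cong) (auto simp: cof_def bij_betw_def inv_into_f_f)
    finally show ?thesis .
  qed
  have lin: "linear F" unfolding F_def
    by (intro linearI) (auto simp: vec_eq_iff algebra_simps sum.distrib sum_distrib_left)
  have "inj F"
  proof (rule linear_injective_0[OF lin, THEN iffD2], intro allI impI)
    fix v assume "F v = 0"
    then have "\<forall>j'. (\<Sum>n<8. cof v n * M n j') = 0" unfolding reidx F_def by (simp add: vec_eq_iff)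
    then have "\<forall>n<8. cof v n = 0" using indep by blast
    then have "v $ i = 0" for i
      using bij by (metis bij_betw_apply cof_def inv_into_f_f bij_betw_imp_inj_on iso_tuple_UNIV_I lessThan_iff)
    then show "v = 0" by (simp add: vec_eq_iff)
  qed
  then have "surj F" using linear_injective_imp_surjective[OF lin] by blast
  then obtain v where v: "F v = axis j 1" by (metis surjE)
  show ?thesis
  proof (intro exI[of _ "cof v"] allI)
    fix j'
    have "(\<Sum>n<8. cof v n * M n j') = F v $ j'" unfolding reidx F_def by simp
    then show "(\<Sum>n<8. cof v n * M n j') = (if j' = j then 1 else 0)" unfolding v by (simp add: axis_def)
  qed
qed


abbreviation pt :: "real dform \<Rightarrow> real^8 \<Rightarrow> pf" where "pt a x \<equiv> (\<lambda>I. a I x)"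

lemma pt_wedge: "pt (wedge a b) x = w (pt a x) (pt b x)"
  by (simp add: wedge_def w_def)
lemma pt_fadd: "pt (fadd a b) x = pt a x + pt b x"
  by (simp add: fadd_def fun_eq_iff)
lemma pt_fsub: "pt (fsub a b) x = pt a x - pt b x"
  by (simp add: fsub_def fun_eq_iff)

lemma oneform_add: "oneform a \<Longrightarrow> oneform b \<Longrightarrow> oneform (a + b)" by (simp add: oneform_def)
lemma oneform_diff: "oneform a \<Longrightarrow> oneform b \<Longrightarrow> oneform (a - b)" by (simp add: oneform_def)

definition dhom :: "nat \<Rightarrow> real dform \<Rightarrow> bool" where
  "dhom n a \<longleftrightarrow> (\<forall>I. card I \<noteq> n \<longrightarrow> (\<forall>y. a I y = 0))"

lemma dhom_fadd: "dhom n a \<Longrightarrow> dhom n b \<Longrightarrow> dhom n (fadd a b)" by (simp add: dhom_def fadd_def)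
lemma dhom_fsub: "dhom n a \<Longrightarrow> dhom n b \<Longrightarrow> dhom n (fsub a b)" by (simp add: dhom_def fsub_def)
lemma dhom_wedge: assumes "dhom n a" "dhom m b" shows "dhom (n + m) (wedge a b)"
  unfolding dhom_def wedge_def
proof (intro allI impI)
  fix K :: "8 set" and y assume c: "card K \<noteq> n + m"
  show "(\<Sum>I\<in>Pow K. (-1) ^ inversions I (K - I) * a I y * b (K - I) y) = 0"
  proof (intro sum.neutral ballI)
    fix I assume "I \<in> Pow K"
    then have "card K = card I + card (K - I)" by (intro card_split) auto
    then have "card I \<noteq> n \<or> card (K - I) \<noteq> m" using c by auto
    then show "(-1) ^ inversions I (K - I) * a I y * b (K - I) y = 0" using assms by (auto simp: dhom_def)
  qed
qed

lemma hom_extd: assumes "dhom n a" shows "hom (Suc n) (pt (ext_d a) x)"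
  unfolding hom_def ext_d_def
proof (intro allI impI sum.neutral ballI)
  fix K :: "8 set" and j assume "card K \<noteq> Suc n" "j \<in> K"
  moreover have "0 < card K" using \<open>j \<in> K\<close> by (auto simp: card_gt_0_iff)
  ultimately have "card (K - {j}) \<noteq> n" by (simp add: card_Diff_singleton)
  then have "partial j (a (K - {j})) x = 0" using assms by (intro partial_zero) (simp add: dhom_def)
  then show "(-1) ^ card {i \<in> K. i < j} * partial j (a (K - {j})) x = 0" by simp
qed

lemma oneform_pt: "dhom 1 a \<Longrightarrow> oneform (pt a x)" by (simp add: dhom_def oneform_def)

lemma sum4_expand: "(\<Sum>k<(4::nat). f k) = f 0 + f 1 + f 2 + (f 3 :: pf)"
  by (simp add: eval_nat_numeral add.assoc)

lemma four:
  fixes AA :: "nat \<Rightarrow> real dform"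
  assumes df: "\<And>i. i < 4 \<Longrightarrow> dfa (AA i) x" and of: "\<And>i. i < 4 \<Longrightarrow> oneform (pt (AA i) x)"
  shows "\<exists>T. pt (ext_d (wedge (wedge (wedge (AA 0) (AA 1)) (AA 2)) (AA 3))) x = (\<Sum>k<4. T k)
           \<and> (\<forall>k<4. \<forall>i<4. i \<noteq> k \<longrightarrow> kills (pt (AA i) x) (T k))"
proof -
  define a where "a i = pt (AA i) x" for i
  define d where "d i = pt (ext_d (AA i)) x" for i
  have o0: "oneform (a 0)" and o1: "oneform (a 1)" and o2: "oneform (a 2)" and o3: "oneform (a 3)"
    using of unfolding a_def by auto
  have df0: "dfa (AA 0) x" and df1: "dfa (AA 1) x" and df2: "dfa (AA 2) x" and df3: "dfa (AA 3) x"
    using df by auto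
  have l1: "pt (ext_d (wedge (AA 0) (AA 1))) x = w (d 0) (a 1) + w (hat (a 0)) (d 1)"
    unfolding a_def d_def by (rule leibniz[OF df0 df1])
  have l2: "pt (ext_d (wedge (wedge (AA 0) (AA 1)) (AA 2))) x = w (pt (ext_d (wedge (AA 0) (AA 1))) x) (a 2) + w (hat (w (a 0) (a 1))) (d 2)"
    using leibniz[OF dfa_wedge[OF df0 df1] df2] by (simp add: a_def d_def pt_wedge)
  have l3: "pt (ext_d (wedge (wedge (wedge (AA 0) (AA 1)) (AA 2)) (AA 3))) x
      = w (pt (ext_d (wedge (wedge (AA 0) (AA 1)) (AA 2))) x) (a 3) + w (hat (w (w (a 0) (a 1)) (a 2))) (d 3)"
    using leibniz[OF dfa_wedge[OF dfa_wedge[OF df0 df1] df2] df3] by (simp add: a_def d_def pt_wedge)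
  define T :: "nat \<Rightarrow> pf" where "T k = (if k = 0 then w (w (w (d 0) (a 1)) (a 2)) (a 3)
      else if k = 1 then w (w (w (hat (a 0)) (d 1)) (a 2)) (a 3)
      else if k = 2 then w (w (hat (w (a 0) (a 1))) (d 2)) (a 3)
      else w (hat (w (w (a 0) (a 1)) (a 2))) (d 3))" for k
  have eq: "pt (ext_d (wedge (wedge (wedge (AA 0) (AA 1)) (AA 2)) (AA 3))) x = (\<Sum>k<4. T k)"
    unfolding sum4_expand l3 l2 l1 T_def by (simp add: w_add_left add.assoc)
  have K: "kills (a i) (T k)" if "k < 4" "i < 4" "i \<noteq> k" for k i
    using lt4_cases[OF that(1)] lt4_cases[OF that(2)] that(3) o0 o1 o2 o3 unfolding T_def
    by (auto; blast intro: kills_wl kills_wr kills_hat kills_self)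
  show ?thesis using eq K unfolding a_def by blast
qed


lemma fsum_apply: "(\<Sum>i\<in>S. f i) (I :: 8 set) = (\<Sum>i\<in>S. (f i I :: real))"
proof (cases "finite S")
  case True then show ?thesis by (induction S rule: finite_induct) auto
qed simp

lemma sc_add_left: "sc (r + t) X = sc r X + sc t X" by (auto simp: sc_def fun_eq_iff algebra_simps)

lemma sum_two:
  fixes G :: "nat \<Rightarrow> pf"
  assumes k: "k < 4"
  shows "(\<Sum>i<8. sc ((if i = k then c1 else 0) + (if i = k + 4 then c2 else 0)) (G i)) = sc c1 (G k) + sc c2 (G (k + 4))"
proof -
  have "(\<Sum>i<8. sc ((if i = k then c1 else 0) + (if i = k + 4 then c2 else 0)) (G i))
      = (\<Sum>i<8. (if i = k then sc c1 (G i) else 0)) + (\<Sum>i<8. (if i = k + 4 then sc c2 (G i) else 0))"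
    unfolding sc_add_left sum.distrib by (intro arg_cong2[where f="(+)"] sum.cong) (auto simp: sc_def zero_fun_def)
  also have "\<dots> = sc c1 (G k) + sc c2 (G (k + 4))" using k by (simp add: sum.delta)
  finally show ?thesis .
qed

lemma dxf_span:
  fixes E :: "nat \<Rightarrow> pf"
  assumes E1: "\<And>n. n < 8 \<Longrightarrow> oneform (E n)"
    and indep: "\<forall>c::nat \<Rightarrow> real. (\<forall>j. (\<Sum>i<8. c i * E i {j}) = 0) \<longrightarrow> (\<forall>i<8. c i = 0)"
  shows "\<exists>b. dxf j = (\<Sum>i<8. sc (b i) (E i))"
proof -
  obtain b where b: "\<forall>j'. (\<Sum>i<8. b i * E i {j'}) = (if j' = j then 1 else 0)"
    using coframe_span[OF indep] by blast
  show ?thesis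
  proof (intro exI[of _ b] ext)
    fix I :: "8 set"
    show "dxf j I = (\<Sum>i<8. sc (b i) (E i)) I"
    proof (cases "card I = 1")
      case True
      then obtain j' where I: "I = {j'}" by (auto simp: card_1_singleton_iff)
      show ?thesis unfolding fsum_apply I using b by (simp add: sc_def dxf_def)
    next
      case False
      then have "E i I = 0" if "i < 8" for i using E1[OF that] by (simp add: oneform_def)
      then show ?thesis unfolding fsum_apply using False by (auto simp: sc_def dxf_def)
    qed
  qed
qed

lemma hat_q: "oneform u \<Longrightarrow> oneform v \<Longrightarrow> hat (w u v) = w u v"
  by (simp add: hat_w hat_oneform w_uminus_left w_uminus_right)

lemma pointwise:
  fixes e :: "nat \<Rightarrow> real dform" and x :: "real^8"
  assumes dh: "\<And>i. i < 8 \<Longrightarrow> dhom 1 (e i)"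
    and df: "\<And>i. i < 8 \<Longrightarrow> dfa (e i) x"
    and indep: "\<forall>c::nat \<Rightarrow> real. (\<forall>j. (\<Sum>i<8. c i * e i {j} x) = 0) \<longrightarrow> (\<forall>i<8. c i = 0)"
    and sinne: "sin (2 * \<theta>) \<noteq> 0"
  shows "(\<forall>K. ext_d (Phi e \<theta>) K x = 0) \<longleftrightarrow>
         (\<forall>K. ext_d (omega_r e) K x = 0) \<and> (\<forall>K. ext_d (Omega_plus e) K x = 0) \<and> (\<forall>K. ext_d (Omega_minus e) K x = 0)"
proof -
  define E where "E n = pt (e n) x" for n
  have E1: "oneform (E n)" if "n < 8" for n unfolding E_def by (rule oneform_pt[OF dh[OF that]])
  define AP where "AP i = (if i = 0 then fadd (e 4) (e 0) else if i = 1 then fadd (e 1) (e 5)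
      else if i = 2 then fadd (e 2) (e 6) else fadd (e 3) (e 7))" for i :: nat
  define AM where "AM i = (if i = 0 then fsub (e 4) (e 0) else if i = 1 then fsub (e 1) (e 5)
      else if i = 2 then fsub (e 2) (e 6) else fsub (e 3) (e 7))" for i :: nat
  have Op: "Omega_plus e = wedge (wedge (wedge (AP 0) (AP 1)) (AP 2)) (AP 3)"
    unfolding Omega_plus_def AP_def by simp
  have Om: "Omega_minus e = wedge (wedge (wedge (AM 0) (AM 1)) (AM 2)) (AM 3)"
    unfolding Omega_minus_def AM_def by simp
  have dfAP: "dfa (AP i) x" for i unfolding AP_def by (auto intro!: dfa_fadd df)
  have dfAM: "dfa (AM i) x" for i unfolding AM_def by (auto intro!: dfa_fsub df)
  have dh': "dhom (Suc 0) (e i)" if "i < 8" for i using dh[OF that] by simp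
  have dhAP: "dhom 1 (AP i)" for i unfolding AP_def by (auto intro!: dhom_fadd dh')
  have dhAM: "dhom 1 (AM i)" for i unfolding AM_def by (auto intro!: dhom_fsub dh')
  have dfOp: "dfa (Omega_plus e) x" unfolding Op by (intro dfa_wedge dfAP)
  have dfOm: "dfa (Omega_minus e) x" unfolding Om by (intro dfa_wedge dfAM)
  have "dhom (1+1+1+1) (Omega_plus e)" unfolding Op by (intro dhom_wedge dhAP)
  then have dhOp: "dhom 4 (Omega_plus e)" by (simp add: eval_nat_numeral)
  have "dhom (1+1+1+1) (Omega_minus e)" unfolding Om by (intro dhom_wedge dhAM)
  then have dhOm: "dhom 4 (Omega_minus e)" by (simp add: eval_nat_numeral)
  have dfom: "dfa (omega_r e) x" unfolding omega_r_def by (intro dfa_fadd dfa_wedge df) auto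
  have "dhom (1+1) (omega_r e)" unfolding omega_r_def by (intro dhom_fadd dhom_wedge dh) auto
  then have dhom_om: "dhom 2 (omega_r e)" by (simp add: eval_nat_numeral)
  define P where "P K = ext_d (Omega_plus e) K x" for K
  define M where "M K = ext_d (Omega_minus e) K x" for K
  define C where "C K = ext_d (wedge (omega_r e) (omega_r e)) K x" for K
  have dfC: "dfa (wedge (omega_r e) (omega_r e)) x" by (intro dfa_wedge dfom)
  have phi: "ext_d (Phi e \<theta>) K x = complex_of_real (cos (2 * \<theta>) / 2) * complex_of_real (P K + M K)
      + (\<i> * complex_of_real (sin (2 * \<theta>) / 2)) * complex_of_real (P K - M K) + 1/2 * complex_of_real (C K)" for K
    unfolding Phi_def P_def M_def C_def
    by (simp add: extd_fadd extd_fscale extd_cform extd_fsub dfa_fadd dfa_fsub dfa_fscale dfa_cform dfOp dfOm dfC)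
  have phi0: "ext_d (Phi e \<theta>) K x = 0 \<longleftrightarrow> (cos (2 * \<theta>) / 2 * (P K + M K) + C K / 2 = 0 \<and> sin (2 * \<theta>) / 2 * (P K - M K) = 0)" for K
    unfolding phi by (simp add: complex_eq_iff)
  define om where "om = (\<Sum>k<4. w (E (uix k)) (E (vix k)))"
  have ompt: "pt (omega_r e) x = om"
  proof -
    have u: "uix 0 = 1" "uix 1 = 2" "uix 2 = 3" "uix 3 = 4" "vix 0 = 5" "vix 1 = 6" "vix 2 = 7" "vix 3 = 0"
      by (simp_all add: uix_def vix_def)
    have "pt (omega_r e) x = (w (E 1) (E 5) + w (E 2) (E 6)) + (w (E 3) (E 7) + w (E 4) (E 0))"
      unfolding omega_r_def pt_fadd pt_wedge E_def ..
    also have "\<dots> = om" unfolding om_def sum4_expand u by (simp only: add.assoc)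
    finally show ?thesis .
  qed
  have Eu: "oneform (E (uix k))" if "k < 4" for k using E1 uix_lt[OF that] .
  have Ev: "oneform (E (vix k))" for k using E1 vix_lt .
  have hat_om: "hat om = om" unfolding om_def sum4_expand
    by (simp add: hat_add hat_q Eu Ev)
  have om_comm: "w Y om = w om Y" for Y unfolding om_def
    by (simp add: w_sum_left w_sum_right w_comm2[OF Eu Ev])
  define \<beta> where "\<beta> = pt (ext_d (omega_r e)) x"
  have Cpt: "(\<lambda>K. C K) = w \<beta> om + w om \<beta>"
    unfolding C_def \<beta>_def using leibniz[OF dfom dfom] by (simp add: ompt hat_om)
  have spanE: "\<exists>b. dxf j = (\<Sum>i<8. sc (b i) (E i))" for j
  proof (rule dxf_span[OF E1])
    have "E i {j} = e i {j} x" for i j by (simp add: E_def)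
    then show "\<forall>c. (\<forall>j. (\<Sum>i<8. c i * E i {j}) = 0) \<longrightarrow> (\<forall>i<8. c i = 0)" using indep by simp
  qed
  define pp where "pp k = (if k = 0 then 4 else k)" for k :: nat
  define mm where "mm k = (if k = 0 then 0 else k + 4)" for k :: nat
  have APe: "AP k = fadd (e (pp k)) (e (mm k))" if "k < 4" for k
    using lt4_cases[OF that] unfolding AP_def pp_def mm_def by auto
  have AMe: "AM k = fsub (e (pp k)) (e (mm k))" if "k < 4" for k
    using lt4_cases[OF that] unfolding AM_def pp_def mm_def by auto
  define G where "G i = (if i < 4 then pt (AP i) x else pt (AM (i - 4)) x)" for i
  have G1: "oneform (G i)" for i unfolding G_def using oneform_pt[OF dhAP] oneform_pt[OF dhAM] by auto
  have Gp: "G k = E (pp k) + E (mm k)" if "k < 4" for k unfolding G_def E_def using that by (simp add: APe pt_fadd)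
  have Gm: "G (k + 4) = E (pp k) - E (mm k)" if "k < 4" for k unfolding G_def E_def using that by (simp add: AMe pt_fsub)
  have Ep: "\<exists>b. E (pp k) = (\<Sum>i<8. sc (b i) (G i))" if k: "k < 4" for k
  proof (intro exI)
    show "E (pp k) = (\<Sum>i<8. sc ((if i = k then 1/2 else 0) + (if i = k + 4 then 1/2 else 0)) (G i))"
      unfolding sum_two[OF k] Gp[OF k] Gm[OF k] by (auto simp: sc_def fun_eq_iff field_simps)
  qed
  have Em: "\<exists>b. E (mm k) = (\<Sum>i<8. sc (b i) (G i))" if k: "k < 4" for k
  proof (intro exI)
    show "E (mm k) = (\<Sum>i<8. sc ((if i = k then 1/2 else 0) + (if i = k + 4 then -1/2 else 0)) (G i))"
      unfolding sum_two[OF k] Gp[OF k] Gm[OF k] by (auto simp: sc_def fun_eq_iff field_simps)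
  qed
  have spanG: "\<exists>b. E j = (\<Sum>i<8. sc (b i) (G i))" if j: "j \<in> {..<8}" for j
  proof -
    have "j = pp 0 \<or> j = mm 0 \<or> j = pp 1 \<or> j = mm 1 \<or> j = pp 2 \<or> j = mm 2 \<or> j = pp 3 \<or> j = mm 3"
      using lt8_cases[of j] j unfolding pp_def mm_def by auto
    moreover have "\<exists>b. E (pp k) = (\<Sum>i<8. sc (b i) (G i))" "\<exists>b. E (mm k) = (\<Sum>i<8. sc (b i) (G i))"
      if "k < 4" for k using Ep[OF that] Em[OF that] by auto
    ultimately show ?thesis by (elim disjE) (simp_all del: pp_def mm_def)
  qed
  show ?thesis
  proof
    assume H: "\<forall>K. ext_d (Phi e \<theta>) K x = 0"
    have h1: "P K = M K" for K using H phi0[of K] sinne by auto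
    have h2: "cos (2 * \<theta>) / 2 * (P K + M K) + C K / 2 = 0" for K using H phi0[of K] by auto
    define \<gamma> where "\<gamma> = pt (ext_d (Omega_plus e)) x"
    have \<gamma>M: "\<gamma> = pt (ext_d (Omega_minus e)) x" unfolding \<gamma>_def using h1 unfolding P_def M_def by auto
    obtain T where T: "\<gamma> = (\<Sum>k<4. T k)" "\<And>k i. k < 4 \<Longrightarrow> i < 4 \<Longrightarrow> i \<noteq> k \<Longrightarrow> kills (pt (AP i) x) (T k)"
      using four[of AP x] dfAP oneform_pt[OF dhAP] unfolding \<gamma>_def Op by blast
    obtain T' where T': "\<gamma> = (\<Sum>k<4. T' k)" "\<And>k i. k < 4 \<Longrightarrow> i < 4 \<Longrightarrow> i \<noteq> k \<Longrightarrow> kills (pt (AM i) x) (T' k)"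
      using four[of AM x] dfAM oneform_pt[OF dhAM] unfolding \<gamma>M Om by blast
    have t3: "w (G a) (w (G b) (w (G c) \<gamma>)) = 0" if "a < 8" "b < 8" "c < 8" for a b c
    proof (rule test3[OF _ T(1) _ T'(1)])
      show "\<And>k i. k < 4 \<Longrightarrow> i < 4 \<Longrightarrow> i \<noteq> k \<Longrightarrow> kills (G i) (T k)" using T(2) by (simp add: G_def)
      show "\<And>k i. k < 4 \<Longrightarrow> i < 4 \<Longrightarrow> i \<noteq> k \<Longrightarrow> kills (G (i + 4)) (T' k)" using T'(2) by (simp add: G_def)
    qed (use that G1 in auto)
    have gv: "\<forall>is. length is = 3 \<and> set is \<subseteq> {..<8} \<longrightarrow> nestf (map G is) \<gamma> = 0"
    proof (intro allI impI)
      fix "is" :: "nat list" assume h: "length is = 3 \<and> set is \<subseteq> {..<8}"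
      then obtain a b c where "is = [a, b, c]" by (auto simp: length_Suc_conv numeral_3_eq_3)
      then show "nestf (map G is) \<gamma> = 0" using t3 h by auto
    qed
    have ev: "\<forall>is. length is = 3 \<and> set is \<subseteq> {..<8} \<longrightarrow> nestf (map E is) \<gamma> = 0"
      using span_lemma[of "{..<8}" E 8 G, OF E1 G1 spanG gv] by auto
    have dv: "nestf (map dxf js) \<gamma> = 0" if "length js = 3" for js
      using span_lemma[of UNIV dxf 8 E, OF oneform_dxf E1 spanE ev] that by auto
    have g0: "\<gamma> = 0"
    proof (rule vanish[of 5])
      show "hom 5 \<gamma>" unfolding \<gamma>_def using hom_extd[OF dhOp] by (simp add: eval_nat_numeral)
    qed (use dv in auto)
    have P0: "P K = 0" for K using fun_cong[OF g0, of K] unfolding \<gamma>_def P_def by simp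
    have M0: "M K = 0" for K using P0 h1 by metis
    have C0: "C K = 0" for K using h2[of K] P0 M0 by simp
    have "w \<beta> om + w om \<beta> = 0" using Cpt C0 by (auto simp: fun_eq_iff)
    then have wb: "w om \<beta> = 0" using om_comm[of \<beta>] by (auto simp: fun_eq_iff)
    interpret L: lef E \<beta>
    proof
      show "\<And>n. n < 8 \<Longrightarrow> oneform (E n)" by (rule E1)
      show "w (\<Sum>k<4. w (E (uix k)) (E (vix k))) \<beta> = 0" using wb unfolding om_def .
    qed
    have ev2: "\<forall>is. length is = 5 \<and> set is \<subseteq> {..<8} \<longrightarrow> nestf (map E is) \<beta> = 0"
      using L.lef_main by blast
    have dv2: "nestf (map dxf js) \<beta> = 0" if "length js = 5" for js
      using span_lemma[of UNIV dxf 8 E, OF oneform_dxf E1 spanE ev2] that by auto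
    have b0: "\<beta> = 0"
    proof (rule vanish[of 3])
      show "hom 3 \<beta>" unfolding \<beta>_def using hom_extd[OF dhom_om] by (simp add: eval_nat_numeral)
    qed (use dv2 in auto)
    show "(\<forall>K. ext_d (omega_r e) K x = 0) \<and> (\<forall>K. ext_d (Omega_plus e) K x = 0) \<and> (\<forall>K. ext_d (Omega_minus e) K x = 0)"
      using b0 P0 M0 unfolding \<beta>_def P_def M_def by (auto simp: fun_eq_iff)
  next
    assume H: "(\<forall>K. ext_d (omega_r e) K x = 0) \<and> (\<forall>K. ext_d (Omega_plus e) K x = 0) \<and> (\<forall>K. ext_d (Omega_minus e) K x = 0)"
    have b0: "\<beta> = 0" using H unfolding \<beta>_def by (auto simp: fun_eq_iff)
    have C0: "C K = 0" for K using fun_cong[OF Cpt, of K] b0 by simp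
    show "\<forall>K. ext_d (Phi e \<theta>) K x = 0" using phi0 C0 H unfolding P_def M_def by simp
  qed
qed


theorem mainTheorem3:
  fixes U :: "(real^8) set" and e :: "nat \<Rightarrow> real dform" and \<theta> :: real
  assumes "open U" and "coframe_on U e" and "0 < \<theta>" and "\<theta> < pi / 2"
  shows "sl4_integrable U e \<longleftrightarrow> dclosed_on U (Phi e \<theta>)"
proof -
  have c1: "\<forall>i<8. \<forall>I. card I \<noteq> 1 \<longrightarrow> (\<forall>x. e i I x = 0)"
    and c2: "\<forall>i<8. \<forall>I. smooth8_on U (e i I)"
    and c3: "\<forall>x\<in>U. \<forall>c::nat \<Rightarrow> real. (\<forall>j. (\<Sum>i<8. c i * e i {j} x) = 0) \<longrightarrow> (\<forall>i<8. c i = 0)"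
    using assms(2) unfolding coframe_on_def by blast+
  have dh: "dhom 1 (e i)" if "i < 8" for i using c1 that by (simp add: dhom_def)
  have df: "dfa (e i) x" if "i < 8" "x \<in> U" for i x
  proof -
    have "\<forall>j. (\<lambda>t. foldr partial [] (e i I) (x + t *\<^sub>R axis j 1)) differentiable (at 0)" for I
      using c2 that unfolding smooth8_on_def by blast
    then show ?thesis unfolding dfa_def by simp
  qed
  have sinne: "sin (2 * \<theta>) \<noteq> 0"
  proof -
    have "0 < sin (2 * \<theta>)" using assms(3,4) by (intro sin_gt_zero) auto
    then show ?thesis by simp
  qed
  have pw: "(\<forall>K. ext_d (Phi e \<theta>) K x = 0) \<longleftrightarrow>
         (\<forall>K. ext_d (omega_r e) K x = 0) \<and> (\<forall>K. ext_d (Omega_plus e) K x = 0) \<and> (\<forall>K. ext_d (Omega_minus e) K x = 0)"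
    if "x \<in> U" for x
  proof (rule pointwise[OF dh _ _ sinne])
    show "\<And>i. i < 8 \<Longrightarrow> dfa (e i) x" using df that by blast
    show "\<forall>c::nat \<Rightarrow> real. (\<forall>j. (\<Sum>i<8. c i * e i {j} x) = 0) \<longrightarrow> (\<forall>i<8. c i = 0)" using c3 that by blast
  qed
  show ?thesis unfolding sl4_integrable_def dclosed_on_def using pw by blast
qed


end
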